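(* Let $n_X,n_Y$ be positive integers and let $T$ be a sublinear operator mapping simple functions on $\mathbb{R}^{n_Y}$ (with respect to Lebesgue measure) into measurable functions on $\mathbb{R}^{n_X}$. Assume there are constants $A,B>0$ and $a\in\mathbb{R}$ with $a\neq-\frac{n_X}{2}$ such that for all simple functions $f$ on $\mathbb{R}^{n_Y}$: (i) $\|Tf\|_{L^{\infty}(dx)}\le A\|f\|_{L^1(dy)}$; (ii) $\||x|^aTf\|_{L^2(dx)}\le B\|f\|_{L^2(dy)}$. Then for every $\theta\in(0,1)$ there is a constant $C=C(a,n_X,\theta)$ such that \[ \||x|^{a\theta-(1-\theta)n_X}Tf\|_{L^p(dx)}\le CA^{1-\theta}B^{\theta}\|f\|_{L^p(dy)},\qquad \frac1p=\frac{\theta}{2}+1-\theta, \] for all simple functions $f$ on $\mathbb{R}^{n_Y}$.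
   Context: $T$ sublinear means $|T(f+g)|\le|Tf|+|Tg|$ and $|T(cf)|=|c||Tf|$. Norms in $x$ are over $\mathbb{R}^{n_X}$ with Lebesgue measure, norms in $y$ over $\mathbb{R}^{n_Y}$ with Lebesgue measure. *)

theory Defs
  imports "HOL-Analysis.Analysis" "HOL-Probability.Essential_Supremum"
begin

definition lebesgue_n :: "nat \<Rightarrow> (nat \<Rightarrow> real) measure" where
  "lebesgue_n n = completion (PiM {..<n} (\<lambda>_. lborel))"

definition simple_fun :: "'a measure \<Rightarrow> ('a \<Rightarrow> real) \<Rightarrow> bool" where
  "simple_fun M f \<longleftrightarrow> simple_function M f \<and> emeasure M {y \<in> space M. f y \<noteq> 0} < \<infinity>"

definition Lp_norm :: "'a measure \<Rightarrow> real \<Rightarrow> ('a \<Rightarrow> real) \<Rightarrow> ennreal" where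
  "Lp_norm M p f =
     (let I = (\<integral>\<^sup>+ x. ennreal (\<bar>f x\<bar> powr p) \<partial>M)
      in if I = \<infinity> then \<infinity> else ennreal (enn2real I powr (1 / p)))"

definition Linf_norm :: "'a measure \<Rightarrow> ('a \<Rightarrow> real) \<Rightarrow> ennreal" where
  "Linf_norm M f = esssup M (\<lambda>x. ennreal \<bar>f x\<bar>)"

definition sublinear_on :: "(('b \<Rightarrow> real) \<Rightarrow> bool) \<Rightarrow> (('b \<Rightarrow> real) \<Rightarrow> ('a \<Rightarrow> real)) \<Rightarrow> bool" where
  "sublinear_on S T \<longleftrightarrow>
     (\<forall>f g x. S f \<and> S g \<longrightarrow> \<bar>T (\<lambda>y. f y + g y) x\<bar> \<le> \<bar>T f x\<bar> + \<bar>T g x\<bar>) \<and>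
     (\<forall>c f x. S f \<longrightarrow> \<bar>T (\<lambda>y. c * f y) x\<bar> = \<bar>c\<bar> * \<bar>T f x\<bar>)"

end

theory Submission
  imports Defs
begin

lemma young0:
  fixes a b \<alpha> :: real
  assumes "0 < \<alpha>" "\<alpha> < 1" "a \<ge> 0" "b \<ge> 0"
  shows "a powr \<alpha> * b powr (1 - \<alpha>) \<le> \<alpha> * a + (1 - \<alpha>) * b"
proof (cases "a = 0 \<or> b = 0")
  case True
  then show ?thesis using assms by auto
next
  case False
  then show ?thesis using Youngs_inequality_0[of \<alpha> "1-\<alpha>" a b] assms by auto
qed

lemma holder_sum:
  fixes c x y :: "'i \<Rightarrow> real"
  assumes fin: "finite S" and a: "0 < \<alpha>" "\<alpha> < 1"
    and nn: "\<And>i. i \<in> S \<Longrightarrow> c i \<ge> 0 \<and> x i \<ge> 0 \<and> y i \<ge> 0"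
  shows "(\<Sum>i\<in>S. c i * (x i powr \<alpha> * y i powr (1 - \<alpha>)))
         \<le> (\<Sum>i\<in>S. c i * x i) powr \<alpha> * (\<Sum>i\<in>S. c i * y i) powr (1 - \<alpha>)"
proof -
  define X where "X = (\<Sum>i\<in>S. c i * x i)"
  define Y where "Y = (\<Sum>i\<in>S. c i * y i)"
  have X0: "X \<ge> 0" unfolding X_def using nn by (intro sum_nonneg) auto
  have Y0: "Y \<ge> 0" unfolding Y_def using nn by (intro sum_nonneg) auto
  show ?thesis
  proof (cases "X = 0 \<or> Y = 0")
    case True
    have "\<forall>i\<in>S. c i * (x i powr \<alpha> * y i powr (1 - \<alpha>)) = 0"
    proof
      fix i assume i: "i \<in> S"
      from True show "c i * (x i powr \<alpha> * y i powr (1 - \<alpha>)) = 0"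
      proof
        assume "X = 0"
        then have "c i * x i = 0" using sum_nonneg_eq_0_iff[OF fin, of "\<lambda>i. c i * x i"] nn i
          unfolding X_def by auto
        then show ?thesis by auto
      next
        assume "Y = 0"
        then have "c i * y i = 0" using sum_nonneg_eq_0_iff[OF fin, of "\<lambda>i. c i * y i"] nn i
          unfolding Y_def by auto
        then show ?thesis using a by auto
      qed
    qed
    then have "(\<Sum>i\<in>S. c i * (x i powr \<alpha> * y i powr (1 - \<alpha>))) = 0" by (rule sum.neutral)
    then show ?thesis by (simp add: X_def[symmetric] Y_def[symmetric])
  next
    case False
    then have Xp: "X > 0" and Yp: "Y > 0" using X0 Y0 by auto
    have "\<forall>i\<in>S. c i * (x i powr \<alpha> * y i powr (1 - \<alpha>))
       \<le> X powr \<alpha> * Y powr (1 - \<alpha>) * (\<alpha> * (c i * x i / X) + (1 - \<alpha>) * (c i * y i / Y))"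
    proof
      fix i assume i: "i \<in> S"
      have "x i powr \<alpha> * y i powr (1 - \<alpha>) = X powr \<alpha> * Y powr (1 - \<alpha>) *
          ((x i / X) powr \<alpha> * (y i / Y) powr (1 - \<alpha>))"
        using Xp Yp nn[OF i] by (simp add: powr_divide)
      also have "\<dots> \<le> X powr \<alpha> * Y powr (1 - \<alpha>) * (\<alpha> * (x i / X) + (1 - \<alpha>) * (y i / Y))"
        using young0[of \<alpha> "x i / X" "y i / Y"] a nn[OF i] Xp Yp
        by (intro mult_left_mono) auto
      finally have "c i * (x i powr \<alpha> * y i powr (1 - \<alpha>)) \<le> c i * (X powr \<alpha> * Y powr (1 - \<alpha>) * (\<alpha> * (x i / X) + (1 - \<alpha>) * (y i / Y)))"
        using nn[OF i] by (intro mult_left_mono) auto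
      also have "\<dots> = X powr \<alpha> * Y powr (1 - \<alpha>) * (\<alpha> * (c i * x i / X) + (1 - \<alpha>) * (c i * y i / Y))"
        by (simp add: algebra_simps)
      finally show "c i * (x i powr \<alpha> * y i powr (1 - \<alpha>))
       \<le> X powr \<alpha> * Y powr (1 - \<alpha>) * (\<alpha> * (c i * x i / X) + (1 - \<alpha>) * (c i * y i / Y))" .
    qed
    then have "(\<Sum>i\<in>S. c i * (x i powr \<alpha> * y i powr (1 - \<alpha>)))
       \<le> (\<Sum>i\<in>S. X powr \<alpha> * Y powr (1 - \<alpha>) * (\<alpha> * (c i * x i / X) + (1 - \<alpha>) * (c i * y i / Y)))"
      by (intro sum_mono) auto
    also have "\<dots> = X powr \<alpha> * Y powr (1 - \<alpha>) * (\<Sum>i\<in>S. \<alpha> * (c i * x i / X) + (1 - \<alpha>) * (c i * y i / Y))"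
      by (rule sum_distrib_left[symmetric])
    also have "(\<Sum>i\<in>S. \<alpha> * (c i * x i / X) + (1 - \<alpha>) * (c i * y i / Y))
        = \<alpha> * ((\<Sum>i\<in>S. c i * x i) / X) + (1 - \<alpha>) * ((\<Sum>i\<in>S. c i * y i) / Y)"
      by (simp add: sum.distrib sum_distrib_left[symmetric] sum_divide_distrib[symmetric])
    also have "\<dots> = \<alpha> * (X / X) + (1 - \<alpha>) * (Y / Y)" by (simp add: X_def Y_def)
    also have "\<alpha> * (X / X) + (1 - \<alpha>) * (Y / Y) = 1" using Xp Yp by simp
    finally show ?thesis by (simp add: X_def Y_def)
  qed
qed

lemma jensen_pow:
  fixes c x :: "'i \<Rightarrow> real"
  assumes fin: "finite S" and p: "p > 1"
    and nn: "\<And>i. i \<in> S \<Longrightarrow> c i \<ge> 0 \<and> x i \<ge> 0"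
  shows "(\<Sum>i\<in>S. c i * x i) powr p \<le> (\<Sum>i\<in>S. c i) powr (p - 1) * (\<Sum>i\<in>S. c i * x i powr p)"
proof -
  have "(\<Sum>i\<in>S. c i * x i) = (\<Sum>i\<in>S. c i * ((x i powr p) powr (1/p) * 1 powr (1 - 1/p)))"
    using nn p by (intro sum.cong) (auto simp: powr_powr)
  also have "\<dots> \<le> (\<Sum>i\<in>S. c i * x i powr p) powr (1/p) * (\<Sum>i\<in>S. c i * 1) powr (1 - 1/p)"
    using p nn by (intro holder_sum fin) auto
  finally have h: "(\<Sum>i\<in>S. c i * x i) \<le> (\<Sum>i\<in>S. c i * x i powr p) powr (1/p) * (\<Sum>i\<in>S. c i) powr (1 - 1/p)"
    by simp
  have s0: "(\<Sum>i\<in>S. c i * x i) \<ge> 0" using nn by (intro sum_nonneg) auto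
  have s1: "(\<Sum>i\<in>S. c i * x i powr p) \<ge> 0" using nn by (intro sum_nonneg) auto
  have s2: "(\<Sum>i\<in>S. c i) \<ge> 0" using nn by (intro sum_nonneg) auto
  have "(\<Sum>i\<in>S. c i * x i) powr p \<le> ((\<Sum>i\<in>S. c i * x i powr p) powr (1/p) * (\<Sum>i\<in>S. c i) powr (1 - 1/p)) powr p"
    using h s0 p by (intro powr_mono2) auto
  also have "\<dots> = (\<Sum>i\<in>S. c i * x i powr p) powr (1/p*p) * (\<Sum>i\<in>S. c i) powr ((1 - 1/p)*p)"
    using s1 s2 p by (simp add: powr_mult powr_powr)
  also have "\<dots> = (\<Sum>i\<in>S. c i * x i powr p) * (\<Sum>i\<in>S. c i) powr (p - 1)"
  proof -
    have "(1/p*p) = 1" "(1 - 1/p)*p = p - 1" using p by (auto simp: field_simps)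
    then show ?thesis using s1 by simp
  qed
  finally show ?thesis by (simp add: mult.commute)
qed

lemma powr_add_le:
  fixes x y \<alpha> :: real
  assumes "0 < \<alpha>" "\<alpha> \<le> 1" "x \<ge> 0" "y \<ge> 0"
  shows "(x + y) powr \<alpha> \<le> x powr \<alpha> + y powr \<alpha>"
proof (cases "x + y = 0")
  case True then show ?thesis using assms by auto
next
  case False
  then have s: "x + y > 0" using assms by auto
  have "x / (x + y) \<le> (x / (x + y)) powr \<alpha>"
    using powr_mono'[of \<alpha> 1 "x/(x+y)"] assms s by (auto simp: divide_le_eq)
  moreover have "y / (x + y) \<le> (y / (x + y)) powr \<alpha>"
    using powr_mono'[of \<alpha> 1 "y/(x+y)"] assms s by (auto simp: divide_le_eq)
  moreover have "x/(x+y) + y/(x+y) = 1" using s by (simp add: add_divide_distrib[symmetric])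
  ultimately have "1 \<le> (x / (x + y)) powr \<alpha> + (y / (x + y)) powr \<alpha>"
    by linarith
  then have "(x + y) powr \<alpha> * 1 \<le> (x + y) powr \<alpha> * ((x / (x + y)) powr \<alpha> + (y / (x + y)) powr \<alpha>)"
    by (intro mult_left_mono) auto
  also have "\<dots> = x powr \<alpha> + y powr \<alpha>"
    using s assms by (simp add: powr_divide distrib_left)
  finally show ?thesis by simp
qed

lemma powr_sum_le:
  fixes x :: "'i \<Rightarrow> real"
  assumes "finite S" "0 < \<alpha>" "\<alpha> \<le> 1" "\<And>i. i \<in> S \<Longrightarrow> x i \<ge> 0"
  shows "(\<Sum>i\<in>S. x i) powr \<alpha> \<le> (\<Sum>i\<in>S. x i powr \<alpha>)"
  using assms
proof (induction S rule: finite_induct)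
  case empty then show ?case by simp
next
  case (insert a F)
  have "(\<Sum>i\<in>insert a F. x i) powr \<alpha> = (x a + (\<Sum>i\<in>F. x i)) powr \<alpha>" using insert by simp
  also have "\<dots> \<le> x a powr \<alpha> + (\<Sum>i\<in>F. x i) powr \<alpha>"
    using insert by (intro powr_add_le) (auto intro: sum_nonneg)
  also have "\<dots> \<le> x a powr \<alpha> + (\<Sum>i\<in>F. x i powr \<alpha>)" using insert by auto
  finally show ?case using insert by simp
qed

definition mass :: "real set \<Rightarrow> (real \<Rightarrow> real) \<Rightarrow> real \<Rightarrow> real" where
  "mass R \<mu> u = (\<Sum>v\<in>{v\<in>R. u < \<bar>v\<bar>}. \<mu> v)"
definition S1f :: "real set \<Rightarrow> (real \<Rightarrow> real) \<Rightarrow> real \<Rightarrow> real" where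
  "S1f R \<mu> l = (\<Sum>v\<in>{v\<in>R. l < \<bar>v\<bar>}. \<bar>v\<bar> * \<mu> v)"
definition S2f :: "real set \<Rightarrow> (real \<Rightarrow> real) \<Rightarrow> real \<Rightarrow> real" where
  "S2f R \<mu> l = (\<Sum>v\<in>{v\<in>R. \<bar>v\<bar> \<le> l}. \<bar>v\<bar> powr 2 * \<mu> v)"
definition Spf :: "real set \<Rightarrow> (real \<Rightarrow> real) \<Rightarrow> real \<Rightarrow> real" where
  "Spf R \<mu> p = (\<Sum>v\<in>R. \<bar>v\<bar> powr p * \<mu> v)"
definition goodlam :: "real set \<Rightarrow> (real \<Rightarrow> real) \<Rightarrow> real \<Rightarrow> real \<Rightarrow> bool" where
  "goodlam R \<mu> \<sigma> l \<longleftrightarrow> 0 \<le> l \<and> mass R \<mu> l \<le> \<sigma>\<^sup>2 \<and> (\<forall>u. 0 \<le> u \<and> u < l \<longrightarrow> \<sigma>\<^sup>2 < mass R \<mu> u)"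

lemma goodlam_exists:
  assumes fin: "finite R"
  shows "\<exists>l. goodlam R \<mu> \<sigma> l"
proof -
  define W where "W = insert 0 (abs ` R)"
  have finW: "finite W" using fin by (simp add: W_def)
  define S where "S = {u\<in>W. mass R \<mu> u \<le> \<sigma>\<^sup>2}"
  have "Max W \<in> S"
  proof -
    have E: "{v\<in>R. Max W < \<bar>v\<bar>} = {}"
      using finW by (auto simp: W_def)
    have "mass R \<mu> (Max W) = 0" unfolding mass_def E by simp
    moreover have "Max W \<in> W" using finW by (intro Max_in) (auto simp: W_def)
    ultimately show ?thesis by (simp add: S_def)
  qed
  then have Sne: "S \<noteq> {}" by auto
  have finS: "finite S" using finW by (simp add: S_def)
  define l where "l = Min S"
  have lS: "l \<in> S" using Sne finS by (simp add: l_def)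
  have "goodlam R \<mu> \<sigma> l"
    unfolding goodlam_def
  proof (intro conjI allI impI)
    show "0 \<le> l" using lS by (auto simp: S_def W_def)
    show "mass R \<mu> l \<le> \<sigma>\<^sup>2" using lS by (auto simp: S_def)
    fix u assume u: "0 \<le> u \<and> u < l"
    define u' where "u' = Max {w\<in>W. w \<le> u}"
    have ne: "{w\<in>W. w \<le> u} \<noteq> {}" using u by (auto simp: W_def)
    have fin': "finite {w\<in>W. w \<le> u}" using finW by simp
    have u'in: "u' \<in> {w\<in>W. w \<le> u}" using Max_in[OF fin' ne] by (simp add: u'_def)
    have eq: "{v\<in>R. u < \<bar>v\<bar>} = {v\<in>R. u' < \<bar>v\<bar>}"
    proof (intro set_eqI iffI)
      fix v assume "v \<in> {v\<in>R. u < \<bar>v\<bar>}" then show "v \<in> {v\<in>R. u' < \<bar>v\<bar>}" using u'in by auto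
    next
      fix v assume v: "v \<in> {v\<in>R. u' < \<bar>v\<bar>}"
      show "v \<in> {v\<in>R. u < \<bar>v\<bar>}"
      proof (rule ccontr)
        assume "v \<notin> {v\<in>R. u < \<bar>v\<bar>}"
        then have "\<bar>v\<bar> \<in> {w\<in>W. w \<le> u}" using v by (auto simp: W_def)
        then have "\<bar>v\<bar> \<le> u'" unfolding u'_def using fin' by (simp add: Max_ge)
        then show False using v by auto
      qed
    qed
    have "u' \<notin> S"
    proof
      assume "u' \<in> S"
      then have "l \<le> u'" unfolding l_def using finS by (simp add: Min_le)
      then show False using u'in u by auto
    qed
    then have "\<sigma>\<^sup>2 < mass R \<mu> u'" using u'in by (auto simp: S_def)
    then show "\<sigma>\<^sup>2 < mass R \<mu> u" by (simp add: mass_def eq)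
  qed
  then show ?thesis by blast
qed

lemma goodlam_mono:
  assumes "goodlam R \<mu> \<sigma> l" "goodlam R \<mu> \<sigma>' l'" "0 < \<sigma>" "\<sigma> \<le> \<sigma>'"
  shows "l' \<le> l"
proof (rule ccontr)
  assume "\<not> l' \<le> l"
  then have "\<sigma>'\<^sup>2 < mass R \<mu> l" using assms(1,2) unfolding goodlam_def by auto
  moreover have "\<sigma>\<^sup>2 \<le> \<sigma>'\<^sup>2" using assms(3,4) by (intro power_mono) auto
  ultimately show False using assms(1) unfolding goodlam_def by auto
qed

lemma geo_inj:
  fixes q :: real
  assumes "0 < q" "q < 1" "finite S" "inj_on h S"
  shows "(\<Sum>j\<in>S. q ^ h j) \<le> 1 / (1 - q)"
proof -
  have "(\<Sum>j\<in>S. q ^ h j) = (\<Sum>i\<in>h ` S. q ^ i)" using assms by (simp add: sum.reindex)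
  also have "\<dots> < 1 / (1 - q)" using assms by (intro geometric_sum_less) auto
  finally show ?thesis by simp
qed

lemma SL1:
  fixes R :: "real set" and \<mu> lam :: "real \<Rightarrow> real"
  assumes fin: "finite R" and \<mu>0: "\<And>v. v \<in> R \<Longrightarrow> \<mu> v \<ge> 0"
    and \<rho>: "\<rho> > 1" and s: "s > 0" and \<theta>: "0 < \<theta>" "\<theta> < 1" and p: "p = 2 / (2 - \<theta>)"
    and hl: "\<And>\<sigma>. \<sigma> > 0 \<Longrightarrow> goodlam R \<mu> \<sigma> (lam \<sigma>)"
  shows "(\<Sum>k<M. ((s * \<rho> powr real k) powr (-\<theta>) * S1f R \<mu> (lam (s * \<rho> powr real k))) powr p)
         \<le> (1 / (1 - \<rho> powr (-\<theta>))) powr p * Spf R \<mu> p"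
proof -
  have p1: "p > 1" using \<theta> unfolding p by (simp add: less_divide_eq)
  have pth: "2 * (p - 1) = \<theta> * p" using p \<theta> by (simp add: field_simps)
  define \<sigma> where "\<sigma> k = s * \<rho> powr real k" for k :: nat
  have \<sigma>pos: "\<sigma> k > 0" for k using s \<rho> by (simp add: \<sigma>_def)
  have \<sigma>mono: "k \<le> j \<Longrightarrow> \<sigma> k \<le> \<sigma> j" for k j
    using s \<rho> by (auto simp: \<sigma>_def intro!: mult_left_mono powr_mono)
  define L where "L k = lam (\<sigma> k)" for k
  define U where "U k = {v\<in>R. L k < \<bar>v\<bar>}" for k
  have gl: "goodlam R \<mu> (\<sigma> k) (L k)" for k using hl \<sigma>pos by (simp add: L_def)
  have Umono: "k \<le> j \<Longrightarrow> U k \<subseteq> U j" for k j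
    using goodlam_mono[OF gl[of k] gl[of j] \<sigma>pos \<sigma>mono] by (auto simp: U_def)
  define V where "V k = (if k = 0 then U 0 else U k - U (k - 1))" for k
  have Uun: "U k = \<Union>(V ` {..k})" for k
  proof (induction k)
    case 0 then show ?case by (simp add: V_def)
  next
    case (Suc k)
    have "\<Union>(V ` {..Suc k}) = \<Union>(V ` {..k}) \<union> V (Suc k)" by (auto simp: atMost_Suc)
    also have "\<dots> = U k \<union> (U (Suc k) - U k)" using Suc by (simp add: V_def)
    also have "\<dots> = U (Suc k)" using Umono[of k "Suc k"] by auto
    finally show ?case by simp
  qed
  have VU: "V j \<subseteq> U j" for j by (auto simp: V_def)
  have Vdisj: "V i \<inter> V j = {}" if "i \<noteq> j" for i j
  proof -
    have *: "V i \<inter> V j = {}" if "i < j" for i j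
    proof -
      have "i \<le> j - 1" using that by simp
      then have "V i \<subseteq> U (j - 1)" using VU[of i] Umono[of i "j - 1"] by blast
      moreover have "V j \<inter> U (j - 1) = {}" using that by (auto simp: V_def)
      ultimately show ?thesis by auto
    qed
    show ?thesis using that *[of i j] *[of j i] by (cases "i < j") auto
  qed
  have VR: "V j \<subseteq> R" for j using VU[of j] by (auto simp: U_def)
  have VRm: "v \<in> V j \<Longrightarrow> \<mu> v \<ge> 0" for v j using VR \<mu>0 by blast
  have finV: "finite (V j)" for j using VR fin by (meson finite_subset)
  define b where "b j = (\<Sum>v\<in>V j. \<bar>v\<bar> * \<mu> v)" for j
  define P where "P j = (\<Sum>v\<in>V j. \<bar>v\<bar> powr p * \<mu> v)" for j
  have b0: "b j \<ge> 0" for j unfolding b_def using VRm by (intro sum_nonneg) auto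
  have P0: "P j \<ge> 0" for j unfolding P_def using VRm by (intro sum_nonneg) auto
  have S1eq: "S1f R \<mu> (L k) = (\<Sum>j\<in>{..k}. b j)" for k
  proof -
    have "S1f R \<mu> (L k) = (\<Sum>v\<in>U k. \<bar>v\<bar> * \<mu> v)" by (simp add: S1f_def U_def)
    also have "\<dots> = (\<Sum>v\<in>\<Union>(V ` {..k}). \<bar>v\<bar> * \<mu> v)" using Uun by simp
    also have "\<dots> = (\<Sum>j\<in>{..k}. b j)" unfolding b_def
      using finV Vdisj by (intro sum.UNION_disjoint) auto
    finally show ?thesis .
  qed
  define x where "x j = \<sigma> j powr (-\<theta>) * b j" for j
  have x0: "x j \<ge> 0" for j using b0 by (simp add: x_def)
  have xP: "x j powr p \<le> P j" for j
  proof -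
    have "(\<Sum>v\<in>V j. \<mu> v * \<bar>v\<bar>) powr p \<le> (\<Sum>v\<in>V j. \<mu> v) powr (p - 1) * (\<Sum>v\<in>V j. \<mu> v * \<bar>v\<bar> powr p)"
      using VRm by (intro jensen_pow[OF finV p1]) auto
    then have "b j powr p \<le> (\<Sum>v\<in>V j. \<mu> v) powr (p - 1) * P j"
      unfolding b_def P_def by (simp add: mult.commute)
    moreover have "(\<Sum>v\<in>V j. \<mu> v) \<le> \<sigma> j ^ 2"
    proof -
      have "(\<Sum>v\<in>V j. \<mu> v) \<le> (\<Sum>v\<in>U j. \<mu> v)"
        using VU VR \<mu>0 fin by (intro sum_mono2) (auto simp: U_def)
      also have "\<dots> = mass R \<mu> (L j)" by (simp add: mass_def U_def)
      also have "\<dots> \<le> \<sigma> j ^ 2" using gl[of j] by (simp add: goodlam_def)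
      finally show ?thesis .
    qed
    then have "(\<Sum>v\<in>V j. \<mu> v) powr (p - 1) \<le> (\<sigma> j ^ 2) powr (p - 1)"
      using VRm p1 by (intro powr_mono2) (auto intro: sum_nonneg)
    also have "(\<sigma> j ^ 2) powr (p - 1) = \<sigma> j powr (\<theta> * p)"
    proof -
      have "\<sigma> j ^ 2 = \<sigma> j powr 2" using \<sigma>pos[of j] by (simp add: powr_numeral)
      then show ?thesis using pth by (simp add: powr_powr)
    qed
    finally have "b j powr p \<le> \<sigma> j powr (\<theta> * p) * P j"
      using \<open>b j powr p \<le> _\<close> P0 by (meson mult_right_mono order_trans)
    then have "\<sigma> j powr (-\<theta> * p) * b j powr p \<le> \<sigma> j powr (-\<theta> * p) * (\<sigma> j powr (\<theta> * p) * P j)"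
      by (intro mult_left_mono) auto
    also have "\<dots> = P j" using \<sigma>pos[of j] by (simp add: powr_add[symmetric] mult.assoc[symmetric])
    finally show ?thesis
      using \<sigma>pos[of j] b0 by (simp add: x_def powr_mult powr_powr)
  qed
  define q where "q = \<rho> powr (-\<theta>)"
  have q0: "0 < q" and q1: "q < 1" using \<rho> \<theta> by (auto simp: q_def powr_less_one)
  define G where "G = 1 / (1 - q)"
  have G0: "G > 0" using q1 by (simp add: G_def)
  have cq: "\<sigma> k powr (-\<theta>) * \<sigma> j powr \<theta> = q ^ (k - j)" if "j \<le> k" for j k
  proof -
    have "\<sigma> k powr (-\<theta>) * \<sigma> j powr \<theta> = (s powr (-\<theta>) * s powr \<theta>) * (\<rho> powr (-\<theta> * real k) * \<rho> powr (\<theta> * real j))"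
      using s \<rho> by (simp add: \<sigma>_def powr_mult powr_powr mult_ac)
    also have "\<dots> = \<rho> powr (-\<theta> * real (k - j))"
      using s \<rho> that by (simp add: powr_add[symmetric] of_nat_diff algebra_simps)
    also have "\<dots> = q powr real (k - j)" using \<rho> by (simp add: q_def powr_powr)
    also have "\<dots> = q ^ (k - j)" using q0 by (simp add: powr_realpow)
    finally show ?thesis .
  qed
  have main: "\<sigma> k powr (-\<theta>) * S1f R \<mu> (L k) = (\<Sum>j\<in>{..k}. q ^ (k - j) * x j)" for k
  proof -
    have "\<sigma> k powr (-\<theta>) * S1f R \<mu> (L k) = (\<Sum>j\<in>{..k}. \<sigma> k powr (-\<theta>) * b j)"
      by (simp add: S1eq sum_distrib_left)
    also have "\<dots> = (\<Sum>j\<in>{..k}. q ^ (k - j) * x j)"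
    proof (intro sum.cong refl)
      fix j assume "j \<in> {..k}"
      then have "q ^ (k - j) * x j = (\<sigma> k powr (-\<theta>) * \<sigma> j powr \<theta>) * (\<sigma> j powr (-\<theta>) * b j)"
        using cq by (simp add: x_def)
      also have "\<dots> = \<sigma> k powr (-\<theta>) * b j"
        using \<sigma>pos[of j] by (simp add: mult_ac powr_add[symmetric])
      finally show "\<sigma> k powr (-\<theta>) * b j = q ^ (k - j) * x j" by simp
    qed
    finally show ?thesis .
  qed
  have geo: "(\<Sum>j\<in>{..k}. q ^ (k - j)) \<le> G" for k
    unfolding G_def using q0 q1 by (intro geo_inj) (auto simp: inj_on_def)
  have geo2: "(\<Sum>k\<in>{k. k < M \<and> j \<le> k}. q ^ (k - j)) \<le> G" for j
    unfolding G_def using q0 q1 by (intro geo_inj) (auto simp: inj_on_def)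
  have step: "(\<sigma> k powr (-\<theta>) * S1f R \<mu> (L k)) powr p \<le> G powr (p - 1) * (\<Sum>j\<in>{..k}. q ^ (k - j) * P j)" for k
  proof -
    have "(\<sigma> k powr (-\<theta>) * S1f R \<mu> (L k)) powr p
        \<le> (\<Sum>j\<in>{..k}. q ^ (k - j)) powr (p - 1) * (\<Sum>j\<in>{..k}. q ^ (k - j) * x j powr p)"
      unfolding main using q0 x0 by (intro jensen_pow p1) auto
    also have "\<dots> \<le> G powr (p - 1) * (\<Sum>j\<in>{..k}. q ^ (k - j) * P j)"
    proof (intro mult_mono)
      show "(\<Sum>j\<in>{..k}. q ^ (k - j)) powr (p - 1) \<le> G powr (p - 1)"
        using geo[of k] q0 p1 by (intro powr_mono2) (auto intro: sum_nonneg)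
      show "(\<Sum>j\<in>{..k}. q ^ (k - j) * x j powr p) \<le> (\<Sum>j\<in>{..k}. q ^ (k - j) * P j)"
        using xP q0 by (intro sum_mono mult_left_mono) auto
      show "0 \<le> G powr (p - 1)" by simp
      show "0 \<le> (\<Sum>j\<in>{..k}. q ^ (k - j) * x j powr p)" using q0 by (intro sum_nonneg) auto
    qed
    finally show ?thesis .
  qed
  have "(\<Sum>k<M. (\<sigma> k powr (-\<theta>) * S1f R \<mu> (L k)) powr p)
      \<le> (\<Sum>k<M. G powr (p - 1) * (\<Sum>j\<in>{..k}. q ^ (k - j) * P j))"
    by (intro sum_mono step)
  also have "\<dots> = G powr (p - 1) * (\<Sum>k<M. (\<Sum>j\<in>{j. j < M \<and> j \<le> k}. q ^ (k - j) * P j))"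
  proof -
    have "(\<Sum>k<M. (\<Sum>j\<in>{..k}. q ^ (k - j) * P j)) = (\<Sum>k<M. (\<Sum>j\<in>{j. j < M \<and> j \<le> k}. q ^ (k - j) * P j))"
      by (rule sum.cong[OF refl], rule sum.cong) auto
    then show ?thesis by (simp add: sum_distrib_left[symmetric])
  qed
  also have "(\<Sum>k<M. (\<Sum>j\<in>{j. j < M \<and> j \<le> k}. q ^ (k - j) * P j))
      = (\<Sum>j<M. (\<Sum>k\<in>{k. k < M \<and> j \<le> k}. q ^ (k - j) * P j))"
    using sum.swap_restrict[of "{..<M}" "{..<M}" "\<lambda>k j. q ^ (k - j) * P j" "\<lambda>k j. j \<le> k"]
    by simp
  also have "\<dots> = (\<Sum>j<M. P j * (\<Sum>k\<in>{k. k < M \<and> j \<le> k}. q ^ (k - j)))"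
    by (simp add: sum_distrib_left mult.commute)
  also have "\<dots> \<le> (\<Sum>j<M. P j * G)"
    using geo2 P0 by (intro sum_mono mult_left_mono) auto
  also have "(\<Sum>j<M. P j * G) = G * (\<Sum>v\<in>\<Union>(V ` {..<M}). \<bar>v\<bar> powr p * \<mu> v)"
    unfolding P_def using finV Vdisj
    by (subst sum.UNION_disjoint) (auto simp: sum_distrib_left mult.commute)
  also have "(\<Sum>v\<in>\<Union>(V ` {..<M}). \<bar>v\<bar> powr p * \<mu> v) \<le> Spf R \<mu> p"
    unfolding Spf_def using VR \<mu>0 fin by (intro sum_mono2) auto
  finally have "(\<Sum>k<M. (\<sigma> k powr (-\<theta>) * S1f R \<mu> (L k)) powr p) \<le> G powr (p - 1) * (G * Spf R \<mu> p)"
    using G0 by (simp add: mult_left_mono)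
  also have "\<dots> = G powr p * Spf R \<mu> p"
  proof -
    have "G powr (p - 1) * G = G powr p" using G0 by (simp add: powr_diff)
    then show ?thesis by (simp add: mult.assoc[symmetric])
  qed
  finally show ?thesis by (simp add: \<sigma>_def L_def G_def q_def)
qed

definition bd :: "real \<Rightarrow> int" where "bd v = \<lceil>log 2 \<bar>v\<bar>\<rceil> - 1"

lemma bd_props:
  assumes "v \<noteq> 0"
  shows "2 powr real_of_int (bd v) < \<bar>v\<bar>" "\<bar>v\<bar> \<le> 2 powr real_of_int (bd v + 1)"
proof -
  have a: "real_of_int \<lceil>log 2 \<bar>v\<bar>\<rceil> - 1 < log 2 \<bar>v\<bar>" by linarith
  have b: "log 2 \<bar>v\<bar> \<le> real_of_int \<lceil>log 2 \<bar>v\<bar>\<rceil>" by simp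
  have e: "2 powr (log 2 \<bar>v\<bar>) = \<bar>v\<bar>" using assms by simp
  show "2 powr real_of_int (bd v) < \<bar>v\<bar>"
    using powr_less_mono[OF a, of 2] e by (simp add: bd_def)
  show "\<bar>v\<bar> \<le> 2 powr real_of_int (bd v + 1)"
    using powr_mono[OF b, of 2] e by (simp add: bd_def)
qed

lemma GL:
  fixes \<rho> s e Y :: real
  assumes \<rho>: "\<rho> > 1" and s: "s > 0" and e: "e > 0" and Y: "Y \<ge> 0"
  shows "(\<Sum>k\<in>{k. k < M \<and> s * \<rho> powr real k < Y}. (s * \<rho> powr real k) powr e)
           \<le> Y powr e / (1 - \<rho> powr (-e))"
proof -
  define K where "K = {k. k < M \<and> s * \<rho> powr real k < Y}"
  define r where "r = \<rho> powr (-e)"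
  have r0: "0 < r" and r1: "r < 1" using \<rho> e by (auto simp: r_def powr_less_one)
  show ?thesis
  proof (cases "K = {}")
    case True
    then show ?thesis using r1 Y by (simp add: K_def[symmetric] r_def[symmetric])
  next
    case False
    have finK: "finite K" by (simp add: K_def)
    define m where "m = Max K"
    have mK: "m \<in> K" using False finK by (simp add: m_def)
    have Km: "k \<in> K \<Longrightarrow> k \<le> m" for k using finK by (simp add: m_def)
    have eq: "(s * \<rho> powr real k) powr e = (s * \<rho> powr real m) powr e * r ^ (m - k)" if "k \<le> m" for k
    proof -
      have "(s * \<rho> powr real m) powr e * r ^ (m - k) = (s * \<rho> powr real m) powr e * r powr real (m - k)"
        using r0 by (simp add: powr_realpow)
      also have "\<dots> = s powr e * \<rho> powr (e * real m - e * real (m - k))"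
        using s \<rho> by (simp add: r_def powr_mult powr_powr powr_add[symmetric] mult_ac)
      also have "e * real m - e * real (m - k) = e * real k" using that by (simp add: of_nat_diff algebra_simps)
      finally show ?thesis using s \<rho> by (simp add: powr_mult powr_powr mult_ac)
    qed
    have "(\<Sum>k\<in>K. (s * \<rho> powr real k) powr e) = (\<Sum>k\<in>K. (s * \<rho> powr real m) powr e * r ^ (m - k))"
      using eq Km by (intro sum.cong refl) blast
    also have "\<dots> = (s * \<rho> powr real m) powr e * (\<Sum>k\<in>K. r ^ (m - k))"
      by (rule sum_distrib_left[symmetric])
    also have "\<dots> \<le> (s * \<rho> powr real m) powr e * (1 / (1 - r))"
    proof -
      have "inj_on (\<lambda>k. m - k) K" by (intro inj_onI) (metis Km diff_diff_cancel)
      then show ?thesis using r0 r1 finK by (intro mult_left_mono geo_inj) auto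
    qed
    also have "\<dots> \<le> Y powr e * (1 / (1 - r))"
      using mK s \<rho> e r1 by (intro mult_right_mono powr_mono2) (auto simp: K_def)
    finally show ?thesis by (simp add: K_def r_def)
  qed
qed

lemma group_sum:
  fixes h :: "real \<Rightarrow> real"
  assumes "finite S" "finite T" "g ` S \<subseteq> T"
  shows "(\<Sum>v\<in>S. h v) = (\<Sum>i\<in>T. \<Sum>v\<in>{v\<in>S. g v = i}. h v)"
  using sum.group[OF assms, of h] by simp

lemma SL2_F:
  fixes i i' :: int and mi mi' p :: real
  assumes "i \<le> i'" "mi \<ge> 0" "mi' \<ge> 0" "1 < p" "p < 2"
  shows "((2 powr real_of_int (i + 1)) powr 2 * mi) powr (p/2) * mi' powr (1 - p/2)
     \<le> 2 powr p * (2 powr (-(p * (1 - p/2)))) ^ nat (i' - i)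
        * ((2 powr real_of_int i) powr p * mi + (2 powr real_of_int i') powr p * mi')"
proof -
  define \<alpha> where "\<alpha> = p / 2"
  have a0: "0 < \<alpha>" "\<alpha> < 1" using assms by (auto simp: \<alpha>_def)
  define Ei where "Ei = (2 powr real_of_int i) powr p * mi"
  define Ei' where "Ei' = (2 powr real_of_int i') powr p * mi'"
  have E0: "Ei \<ge> 0" "Ei' \<ge> 0" using assms by (auto simp: Ei_def Ei'_def)
  have t: "(2 powr (-(p * (1 - p/2)))) ^ nat (i' - i) = 2 powr (-(p * (1 - \<alpha>)) * real_of_int (i' - i))"
    using assms by (simp add: powr_realpow[symmetric] powr_powr \<alpha>_def)
  have "((2 powr real_of_int (i + 1)) powr 2 * mi) powr \<alpha> * mi' powr (1 - \<alpha>)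
      = 2 powr (2 * real_of_int (i + 1) * \<alpha>) * (mi powr \<alpha> * mi' powr (1 - \<alpha>))"
    using assms by (simp add: powr_mult powr_powr mult_ac)
  also have "2 * real_of_int (i + 1) * \<alpha> = p + (-(p * (1 - \<alpha>)) * real_of_int (i' - i))
       + (real_of_int i * p * \<alpha> + real_of_int i' * p * (1 - \<alpha>))"
    by (simp add: \<alpha>_def field_simps)
  also have "2 powr (p + (-(p * (1 - \<alpha>)) * real_of_int (i' - i))
       + (real_of_int i * p * \<alpha> + real_of_int i' * p * (1 - \<alpha>))) * (mi powr \<alpha> * mi' powr (1 - \<alpha>))
     = 2 powr p * 2 powr (-(p * (1 - \<alpha>)) * real_of_int (i' - i)) * (Ei powr \<alpha> * Ei' powr (1 - \<alpha>))"
  proof -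
    have e1: "Ei powr \<alpha> = 2 powr (real_of_int i * p * \<alpha>) * mi powr \<alpha>"
      using assms by (simp add: Ei_def powr_mult powr_powr)
    have e2: "Ei' powr (1 - \<alpha>) = 2 powr (real_of_int i' * p * (1 - \<alpha>)) * mi' powr (1 - \<alpha>)"
      using assms by (simp add: Ei'_def powr_mult powr_powr)
    have e3: "2 powr (p + (-(p * (1 - \<alpha>)) * real_of_int (i' - i))
       + (real_of_int i * p * \<alpha> + real_of_int i' * p * (1 - \<alpha>)))
       = 2 powr p * 2 powr (-(p * (1 - \<alpha>)) * real_of_int (i' - i)) * (2 powr (real_of_int i * p * \<alpha>) * 2 powr (real_of_int i' * p * (1 - \<alpha>)))"
      by (simp only: powr_add)
    show ?thesis unfolding e1 e2 e3 by (simp only: mult_ac)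
  qed
  also have "\<dots> \<le> 2 powr p * 2 powr (-(p * (1 - \<alpha>)) * real_of_int (i' - i)) * (Ei + Ei')"
  proof (intro mult_left_mono)
    show "Ei powr \<alpha> * Ei' powr (1 - \<alpha>) \<le> Ei + Ei'"
      using young0[OF a0 E0] a0 E0 by (smt (verit) mult_left_le_one_le)
  qed auto
  finally have H: "((2 powr real_of_int (i + 1)) powr 2 * mi) powr \<alpha> * mi' powr (1 - \<alpha>)
     \<le> 2 powr p * 2 powr (-(p * (1 - \<alpha>)) * real_of_int (i' - i)) * (Ei + Ei')" .
  show ?thesis unfolding t Ei_def[symmetric] Ei'_def[symmetric] using H by (simp only: \<alpha>_def)
qed

lemma SL2:
  fixes R :: "real set" and \<mu> lam :: "real \<Rightarrow> real"
  assumes fin: "finite R" and R0: "0 \<notin> R" and \<mu>0: "\<And>v. v \<in> R \<Longrightarrow> \<mu> v \<ge> 0"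
    and \<rho>: "\<rho> > 1" and s: "s > 0" and \<theta>: "0 < \<theta>" "\<theta> < 1" and p: "p = 2 / (2 - \<theta>)"
    and hl: "\<And>\<sigma>. \<sigma> > 0 \<Longrightarrow> goodlam R \<mu> \<sigma> (lam \<sigma>)"
  shows "(\<Sum>k<M. (s * \<rho> powr real k) powr (2 - p) * S2f R \<mu> (lam (s * \<rho> powr real k)) powr (p/2))
     \<le> (1 / (1 - \<rho> powr (-(2 - p)))) * 2 powr p * (2 * (1 / (1 - 2 powr (-(p * (1 - p/2))))))
        * Spf R \<mu> p"
proof -
  have p1: "p > 1" using \<theta> unfolding p by (simp add: less_divide_eq)
  have p2: "p < 2" using \<theta> unfolding p by (simp add: divide_less_eq)
  define \<sigma> where "\<sigma> k = s * \<rho> powr real k" for k :: nat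
  have \<sigma>pos: "\<sigma> k > 0" for k using s \<rho> by (simp add: \<sigma>_def)
  define L where "L k = lam (\<sigma> k)" for k
  have gl: "goodlam R \<mu> (\<sigma> k) (L k)" for k using hl \<sigma>pos by (simp add: L_def)
  define w where "w i = (2::real) powr real_of_int i" for i :: int
  have w0: "w i > 0" for i by (simp add: w_def)
  have bdw: "v \<in> R \<Longrightarrow> w (bd v) < \<bar>v\<bar> \<and> \<bar>v\<bar> \<le> w (bd v + 1)" for v
    using bd_props[of v] R0 by (auto simp: w_def)
  define I where "I = bd ` R"
  have finI: "finite I" using fin by (simp add: I_def)
  define m where "m i = (\<Sum>v\<in>{v\<in>R. bd v = i}. \<mu> v)" for i
  have m0: "m i \<ge> 0" for i unfolding m_def using \<mu>0 by (intro sum_nonneg) auto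
  define E where "E i = w i powr p * m i" for i
  have E0: "E i \<ge> 0" for i using m0 by (simp add: E_def)
  define F where "F i = (w (i + 1) powr 2 * m i) powr (p/2)" for i
  have F0: "F i \<ge> 0" for i by (simp add: F_def)
  define T where "T L = {i\<in>I. w i < L}" for L
  have A: "S2f R \<mu> l \<le> (\<Sum>i\<in>T l. w (i + 1) powr 2 * m i)" for l
  proof -
    have "S2f R \<mu> l \<le> (\<Sum>v\<in>{v\<in>R. \<bar>v\<bar> \<le> l}. w (bd v + 1) powr 2 * \<mu> v)"
      unfolding S2f_def using bdw \<mu>0
      by (intro sum_mono mult_right_mono powr_mono2) auto
    also have "\<dots> \<le> (\<Sum>v\<in>{v\<in>R. w (bd v) < l}. w (bd v + 1) powr 2 * \<mu> v)"
      using fin bdw \<mu>0 by (intro sum_mono2) force+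
    also have "\<dots> = (\<Sum>i\<in>T l. \<Sum>v\<in>{v\<in>{v\<in>R. w (bd v) < l}. bd v = i}. w (bd v + 1) powr 2 * \<mu> v)"
      using fin finI by (intro group_sum) (auto simp: T_def I_def)
    also have "\<dots> = (\<Sum>i\<in>T l. w (i + 1) powr 2 * m i)"
    proof (intro sum.cong refl)
      fix i assume i: "i \<in> T l"
      have "{v\<in>{v\<in>R. w (bd v) < l}. bd v = i} = {v\<in>R. bd v = i}" using i by (auto simp: T_def)
      then show "(\<Sum>v\<in>{v\<in>{v\<in>R. w (bd v) < l}. bd v = i}. w (bd v + 1) powr 2 * \<mu> v) = w (i + 1) powr 2 * m i"
        by (simp add: m_def sum_distrib_left)
    qed
    finally show ?thesis .
  qed
  have B: "S2f R \<mu> l powr (p/2) \<le> (\<Sum>i\<in>T l. F i)" for l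
  proof -
    have "S2f R \<mu> l \<ge> 0" unfolding S2f_def using \<mu>0 by (intro sum_nonneg) auto
    then have "S2f R \<mu> l powr (p/2) \<le> (\<Sum>i\<in>T l. w (i + 1) powr 2 * m i) powr (p/2)"
      using A p1 by (intro powr_mono2) auto
    also have "\<dots> \<le> (\<Sum>i\<in>T l. F i)"
      unfolding F_def using p1 p2 m0 finI by (intro powr_sum_le) (auto simp: T_def)
    finally show ?thesis .
  qed
  define N where "N i = mass R \<mu> (w i)" for i
  have N0: "N i \<ge> 0" for i unfolding N_def mass_def using \<mu>0 by (intro sum_nonneg) auto
  define G2 where "G2 = 1 / (1 - \<rho> powr (-(2 - p)))"
  have G2pos: "G2 > 0" using \<rho> p2 by (simp add: G2_def powr_less_one)
  have D: "(\<Sum>k\<in>{k. k < M \<and> w i < L k}. \<sigma> k powr (2 - p)) \<le> G2 * N i powr ((2 - p) / 2)" for i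
  proof -
    have "(\<Sum>k\<in>{k. k < M \<and> w i < L k}. \<sigma> k powr (2 - p))
        \<le> (\<Sum>k\<in>{k. k < M \<and> s * \<rho> powr real k < sqrt (N i)}. (s * \<rho> powr real k) powr (2 - p))"
      unfolding \<sigma>_def
    proof (intro sum_mono2)
      show "{k. k < M \<and> w i < L k} \<subseteq> {k. k < M \<and> s * \<rho> powr real k < sqrt (N i)}"
      proof safe
        fix k assume "k < M" "w i < L k"
        then have "\<sigma> k ^ 2 < N i" using gl[of k] w0[of i] by (auto simp: goodlam_def N_def \<sigma>_def)
        then show "s * \<rho> powr real k < sqrt (N i)"
          using \<sigma>pos[of k] by (simp add: \<sigma>_def real_less_rsqrt)
      qed
    qed auto
    also have "\<dots> \<le> sqrt (N i) powr (2 - p) / (1 - \<rho> powr (-(2 - p)))"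
      using \<rho> s p2 N0[of i] by (intro GL) auto
    also have "sqrt (N i) powr (2 - p) = N i powr ((2 - p) / 2)"
      using N0[of i] by (simp add: powr_half_sqrt[symmetric] powr_powr)
    finally show ?thesis by (simp add: G2_def)
  qed
  have E: "N i powr ((2 - p) / 2) \<le> (\<Sum>i'\<in>{i'\<in>I. i \<le> i'}. m i' powr ((2 - p) / 2))" for i
  proof -
    have "N i \<le> (\<Sum>v\<in>{v\<in>R. i \<le> bd v}. \<mu> v)"
      unfolding N_def mass_def
    proof (intro sum_mono2)
      show "{v \<in> R. w i < \<bar>v\<bar>} \<subseteq> {v \<in> R. i \<le> bd v}"
      proof safe
        fix v assume v: "v \<in> R" "w i < \<bar>v\<bar>"
        then have "w i < w (bd v + 1)" using bdw[of v] by auto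
        then have "i < bd v + 1" by (simp add: w_def)
        then show "i \<le> bd v" by simp
      qed
    qed (use fin \<mu>0 in auto)
    also have "\<dots> = (\<Sum>i'\<in>{i'\<in>I. i \<le> i'}. \<Sum>v\<in>{v\<in>{v\<in>R. i \<le> bd v}. bd v = i'}. \<mu> v)"
      using fin finI by (intro group_sum) (auto simp: I_def)
    also have "\<dots> = (\<Sum>i'\<in>{i'\<in>I. i \<le> i'}. m i')"
      unfolding m_def by (intro sum.cong refl arg_cong2[where f=sum]) auto
    finally have "N i powr ((2 - p) / 2) \<le> (\<Sum>i'\<in>{i'\<in>I. i \<le> i'}. m i') powr ((2 - p) / 2)"
      using N0[of i] p2 by (intro powr_mono2) auto
    also have "\<dots> \<le> (\<Sum>i'\<in>{i'\<in>I. i \<le> i'}. m i' powr ((2 - p) / 2))"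
      using finI p1 p2 m0 by (intro powr_sum_le) auto
    finally show ?thesis .
  qed
  define t where "t = (2::real) powr (-(p * (1 - p/2)))"
  have t0: "0 < t" and t1: "t < 1" using p1 p2 by (auto simp: t_def powr_less_one)
  define G3 where "G3 = 1 / (1 - t)"
  have g1: "(\<Sum>i'\<in>{i'\<in>I. i \<le> i'}. t ^ nat (i' - i)) \<le> G3" for i
    unfolding G3_def using t0 t1 finI by (intro geo_inj) (auto simp: inj_on_def)
  have g2: "(\<Sum>i'\<in>{i'\<in>I. i' \<le> i}. t ^ nat (i - i')) \<le> G3" for i
    unfolding G3_def using t0 t1 finI by (intro geo_inj) (auto simp: inj_on_def)
  have "(\<Sum>k<M. \<sigma> k powr (2 - p) * S2f R \<mu> (L k) powr (p/2))
      \<le> (\<Sum>k<M. \<Sum>i\<in>{i\<in>I. w i < L k}. \<sigma> k powr (2 - p) * F i)"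
  proof (intro sum_mono)
    fix k
    have "\<sigma> k powr (2 - p) * S2f R \<mu> (L k) powr (p/2) \<le> \<sigma> k powr (2 - p) * (\<Sum>i\<in>{i\<in>I. w i < L k}. F i)"
      using B[of "L k"] unfolding T_def by (intro mult_left_mono) auto
    then show "\<sigma> k powr (2 - p) * S2f R \<mu> (L k) powr (p/2) \<le> (\<Sum>i\<in>{i\<in>I. w i < L k}. \<sigma> k powr (2 - p) * F i)"
      by (simp add: sum_distrib_left)
  qed
  also have "\<dots> = (\<Sum>i\<in>I. \<Sum>k\<in>{k. k < M \<and> w i < L k}. \<sigma> k powr (2 - p) * F i)"
    using sum.swap_restrict[of "{..<M}" I "\<lambda>k i. \<sigma> k powr (2 - p) * F i" "\<lambda>k i. w i < L k"] finI
    by simp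
  also have "\<dots> = (\<Sum>i\<in>I. F i * (\<Sum>k\<in>{k. k < M \<and> w i < L k}. \<sigma> k powr (2 - p)))"
    by (simp add: sum_distrib_left mult.commute)
  also have "\<dots> \<le> (\<Sum>i\<in>I. F i * (G2 * (\<Sum>i'\<in>{i'\<in>I. i \<le> i'}. m i' powr ((2 - p) / 2))))"
  proof (intro sum_mono mult_left_mono F0)
    fix i show "(\<Sum>k\<in>{k. k < M \<and> w i < L k}. \<sigma> k powr (2 - p)) \<le> G2 * (\<Sum>i'\<in>{i'\<in>I. i \<le> i'}. m i' powr ((2 - p) / 2))"
      using D[of i] E[of i] G2pos by (meson mult_left_mono less_imp_le order_trans)
  qed
  also have "\<dots> = G2 * (\<Sum>i\<in>I. \<Sum>i'\<in>{i'\<in>I. i \<le> i'}. F i * m i' powr (1 - p/2))"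
    by (simp add: sum_distrib_left mult_ac diff_divide_distrib)
  also have "\<dots> \<le> G2 * (\<Sum>i\<in>I. \<Sum>i'\<in>{i'\<in>I. i \<le> i'}. 2 powr p * (t ^ nat (i' - i) * (E i + E i')))"
  proof (intro mult_left_mono sum_mono)
    fix i i' assume "i' \<in> {i'\<in>I. i \<le> i'}"
    then show "F i * m i' powr (1 - p/2) \<le> 2 powr p * (t ^ nat (i' - i) * (E i + E i'))"
      using SL2_F[of i i' "m i" "m i'" p] m0 p1 p2
      by (simp add: F_def E_def w_def t_def mult.assoc)
  qed (use G2pos in auto)
  also have "(\<Sum>i\<in>I. \<Sum>i'\<in>{i'\<in>I. i \<le> i'}. 2 powr p * (t ^ nat (i' - i) * (E i + E i')))
     = 2 powr p * ((\<Sum>i\<in>I. E i * (\<Sum>i'\<in>{i'\<in>I. i \<le> i'}. t ^ nat (i' - i)))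
          + (\<Sum>i\<in>I. \<Sum>i'\<in>{i'\<in>I. i \<le> i'}. t ^ nat (i' - i) * E i'))"
    by (simp only: distrib_left sum.distrib sum_distrib_left) (simp add: mult_ac)
  also have "(\<Sum>i\<in>I. \<Sum>i'\<in>{i'\<in>I. i \<le> i'}. t ^ nat (i' - i) * E i')
      = (\<Sum>i'\<in>I. E i' * (\<Sum>i\<in>{i\<in>I. i \<le> i'}. t ^ nat (i' - i)))"
    using sum.swap_restrict[of I I "\<lambda>i i'. t ^ nat (i' - i) * E i'" "\<lambda>i i'. i \<le> i'"] finI
    by (simp add: sum_distrib_left mult.commute)
  also have "2 powr p * ((\<Sum>i\<in>I. E i * (\<Sum>i'\<in>{i'\<in>I. i \<le> i'}. t ^ nat (i' - i)))
          + (\<Sum>i'\<in>I. E i' * (\<Sum>i\<in>{i\<in>I. i \<le> i'}. t ^ nat (i' - i))))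
      \<le> 2 powr p * ((\<Sum>i\<in>I. E i * G3) + (\<Sum>i'\<in>I. E i' * G3))"
    using g1 g2 E0 by (intro mult_left_mono add_mono sum_mono) auto
  also have "\<dots> = 2 powr p * (2 * G3) * (\<Sum>i\<in>I. E i)"
    by (simp add: sum_distrib_right[symmetric] sum_distrib_left[symmetric] algebra_simps)
  also have "2 powr p * (2 * G3) * (\<Sum>i\<in>I. E i) \<le> 2 powr p * (2 * G3) * Spf R \<mu> p"
  proof -
    have "(\<Sum>i\<in>I. E i) \<le> (\<Sum>i\<in>I. \<Sum>v\<in>{v\<in>R. bd v = i}. \<bar>v\<bar> powr p * \<mu> v)"
    proof (intro sum_mono)
      fix i assume "i \<in> I"
      have "E i = (\<Sum>v\<in>{v\<in>R. bd v = i}. w (bd v) powr p * \<mu> v)"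
        by (simp add: E_def m_def sum_distrib_left)
      also have "\<dots> \<le> (\<Sum>v\<in>{v\<in>R. bd v = i}. \<bar>v\<bar> powr p * \<mu> v)"
        using bdw \<mu>0 p1 w0 by (intro sum_mono mult_right_mono powr_mono2) (auto simp: less_imp_le)
      finally show "E i \<le> (\<Sum>v\<in>{v\<in>R. bd v = i}. \<bar>v\<bar> powr p * \<mu> v)" .
    qed
    also have "\<dots> = Spf R \<mu> p"
      unfolding Spf_def using fin finI by (intro group_sum[symmetric]) (auto simp: I_def)
    finally show ?thesis using t1 by (intro mult_left_mono) (auto simp: G3_def)
  qed
  finally have "(\<Sum>k<M. \<sigma> k powr (2 - p) * S2f R \<mu> (L k) powr (p/2))
      \<le> G2 * (2 powr p * (2 * G3) * Spf R \<mu> p)"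
    using G2pos by (simp add: mult_left_mono)
  then show ?thesis by (simp add: \<sigma>_def L_def G2_def G3_def t_def mult_ac)
qed

definition CS1 :: "real \<Rightarrow> real \<Rightarrow> real" where
  "CS1 r \<theta> = (1 / (1 - r powr (-\<theta>))) powr (2 / (2 - \<theta>))"
definition CS2 :: "real \<Rightarrow> real \<Rightarrow> real" where
  "CS2 r \<theta> = (let p = 2 / (2 - \<theta>) in
     (1 / (1 - r powr (-(2 - p)))) * 2 powr p * (2 * (1 / (1 - 2 powr (-(p * (1 - p/2)))))))"
definition CS :: "real \<Rightarrow> real \<Rightarrow> real" where
  "CS \<rho> \<theta> = CS1 (max \<rho> (1/\<rho>)) \<theta> + CS2 (max \<rho> (1/\<rho>)) \<theta>"

definition Phi :: "real set \<Rightarrow> (real \<Rightarrow> real) \<Rightarrow> (real \<Rightarrow> real) \<Rightarrow> real \<Rightarrow> real \<Rightarrow> real" where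
  "Phi R \<mu> lam \<theta> \<sigma> = (let p = 2 / (2 - \<theta>) in
     (\<sigma> powr (-\<theta>) * S1f R \<mu> (lam \<sigma>)) powr p + \<sigma> powr (2 - p) * S2f R \<mu> (lam \<sigma>) powr (p/2))"

lemma SL_gt1:
  fixes R :: "real set" and \<mu> lam :: "real \<Rightarrow> real"
  assumes fin: "finite R" and R0: "0 \<notin> R" and \<mu>0: "\<And>v. v \<in> R \<Longrightarrow> \<mu> v \<ge> 0"
    and \<rho>: "\<rho> > 1" and s: "s > 0" and \<theta>: "0 < \<theta>" "\<theta> < 1"
    and hl: "\<And>\<sigma>. \<sigma> > 0 \<Longrightarrow> goodlam R \<mu> \<sigma> (lam \<sigma>)"
  shows "(\<Sum>k<M. Phi R \<mu> lam \<theta> (s * \<rho> powr real k)) \<le> (CS1 \<rho> \<theta> + CS2 \<rho> \<theta>) * Spf R \<mu> (2 / (2 - \<theta>))"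
proof -
  define p where "p = 2 / (2 - \<theta>)"
  have "(\<Sum>k<M. Phi R \<mu> lam \<theta> (s * \<rho> powr real k))
     = (\<Sum>k<M. ((s * \<rho> powr real k) powr (-\<theta>) * S1f R \<mu> (lam (s * \<rho> powr real k))) powr p)
       + (\<Sum>k<M. (s * \<rho> powr real k) powr (2 - p) * S2f R \<mu> (lam (s * \<rho> powr real k)) powr (p/2))"
    by (simp add: Phi_def p_def Let_def sum.distrib)
  also have "\<dots> \<le> CS1 \<rho> \<theta> * Spf R \<mu> p + CS2 \<rho> \<theta> * Spf R \<mu> p"
  proof (intro add_mono)
    show "(\<Sum>k<M. ((s * \<rho> powr real k) powr (-\<theta>) * S1f R \<mu> (lam (s * \<rho> powr real k))) powr p) \<le> CS1 \<rho> \<theta> * Spf R \<mu> p"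
      using SL1[OF fin \<mu>0 \<rho> s \<theta> p_def hl] by (simp add: CS1_def p_def)
    show "(\<Sum>k<M. (s * \<rho> powr real k) powr (2 - p) * S2f R \<mu> (lam (s * \<rho> powr real k)) powr (p/2)) \<le> CS2 \<rho> \<theta> * Spf R \<mu> p"
      using SL2[OF fin R0 \<mu>0 \<rho> s \<theta> p_def hl] by (simp add: CS2_def p_def Let_def)
  qed
  finally show ?thesis by (simp add: p_def distrib_right)
qed

lemma SL:
  fixes R :: "real set" and \<mu> lam :: "real \<Rightarrow> real"
  assumes fin: "finite R" and R0: "0 \<notin> R" and \<mu>0: "\<And>v. v \<in> R \<Longrightarrow> \<mu> v \<ge> 0"
    and \<rho>: "\<rho> > 0" "\<rho> \<noteq> 1" and s: "s > 0" and \<theta>: "0 < \<theta>" "\<theta> < 1"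
    and hl: "\<And>\<sigma>. \<sigma> > 0 \<Longrightarrow> goodlam R \<mu> \<sigma> (lam \<sigma>)"
  shows "(\<Sum>k<M. Phi R \<mu> lam \<theta> (s * \<rho> powr real k)) \<le> CS \<rho> \<theta> * Spf R \<mu> (2 / (2 - \<theta>))"
proof (cases "\<rho> > 1")
  case True
  then have "1/\<rho> < 1" by simp
  then have h: "\<not> (\<rho> \<le> 1/\<rho>)" using True by linarith
  have "max \<rho> (1/\<rho>) = \<rho>" unfolding max_def using h by (rule if_not_P)
  then show ?thesis using SL_gt1[OF fin R0 \<mu>0 True s \<theta> hl] by (simp add: CS_def)
next
  case False
  then have r1: "\<rho> < 1" using \<rho> by simp
  have ir: "1/\<rho> > 1" using r1 \<rho> by simp
  have mx: "max \<rho> (1/\<rho>) = 1/\<rho>" using ir r1 by simp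
  define s' where "s' = s * \<rho> powr real (M - 1)"
  have s': "s' > 0" using s \<rho> by (simp add: s'_def)
  have "(\<Sum>k<M. Phi R \<mu> lam \<theta> (s * \<rho> powr real k)) = (\<Sum>j<M. Phi R \<mu> lam \<theta> (s * \<rho> powr real (M - Suc j)))"
    by (rule sum.nat_diff_reindex[symmetric])
  also have "\<dots> = (\<Sum>j<M. Phi R \<mu> lam \<theta> (s' * (1/\<rho>) powr real j))"
  proof (intro sum.cong refl)
    fix j assume "j \<in> {..<M}"
    then have "real (M - Suc j) = real (M - 1) - real j" by (simp add: of_nat_diff)
    then have "s * \<rho> powr real (M - Suc j) = s' * (1/\<rho>) powr real j"
      using \<rho> by (simp add: s'_def powr_diff powr_divide)
    then show "Phi R \<mu> lam \<theta> (s * \<rho> powr real (M - Suc j)) = Phi R \<mu> lam \<theta> (s' * (1/\<rho>) powr real j)"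
      by simp
  qed
  also have "\<dots> \<le> (CS1 (1/\<rho>) \<theta> + CS2 (1/\<rho>) \<theta>) * Spf R \<mu> (2 / (2 - \<theta>))"
    by (rule SL_gt1[OF fin R0 \<mu>0 ir s' \<theta> hl])
  finally show ?thesis by (simp add: CS_def mx)
qed

definition RR :: "'a measure \<Rightarrow> ('a \<Rightarrow> real) \<Rightarrow> real set" where
  "RR M f = f ` space M - {0}"
definition MU :: "'a measure \<Rightarrow> ('a \<Rightarrow> real) \<Rightarrow> real \<Rightarrow> real" where
  "MU M f v = measure M {y\<in>space M. f y = v}"

lemma MU_nonneg[simp]: "MU M f v \<ge> 0" by (simp add: MU_def)

lemma simple_fun_basic:
  assumes "simple_fun M f"
  shows "finite (RR M f)" "0 \<notin> RR M f" "f \<in> borel_measurable M"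
    "\<And>v. v \<in> RR M f \<Longrightarrow> {y\<in>space M. f y = v} \<in> sets M"
    "\<And>v. v \<in> RR M f \<Longrightarrow> emeasure M {y\<in>space M. f y = v} = ennreal (MU M f v)"
proof -
  have sf: "simple_function M f" and fin: "emeasure M {y \<in> space M. f y \<noteq> 0} < \<infinity>"
    using assms by (auto simp: simple_fun_def)
  show "finite (RR M f)" using sf by (simp add: RR_def simple_function_def)
  show "0 \<notin> RR M f" by (simp add: RR_def)
  show bm: "f \<in> borel_measurable M" using sf by (rule borel_measurable_simple_function)
  show ms: "{y\<in>space M. f y = v} \<in> sets M" if "v \<in> RR M f" for v
  proof -
    from that have "v \<in> f ` space M" by (simp add: RR_def)
    then obtain x where x: "x \<in> space M" "v = f x" by blast
    have "f -` {f x} \<inter> space M \<in> sets M" using sf x by (simp add: simple_function_def)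
    moreover have "f -` {f x} \<inter> space M = {y\<in>space M. f y = v}" using x by auto
    ultimately show ?thesis by simp
  qed
  show "emeasure M {y\<in>space M. f y = v} = ennreal (MU M f v)" if v: "v \<in> RR M f" for v
  proof -
    have nz: "{y \<in> space M. f y \<noteq> 0} \<in> sets M" using bm by measurable
    have "emeasure M {y\<in>space M. f y = v} \<le> emeasure M {y \<in> space M. f y \<noteq> 0}"
      using v nz by (intro emeasure_mono) (auto simp: RR_def)
    then have "emeasure M {y\<in>space M. f y = v} \<noteq> top" using fin by (auto simp: top_unique)
    then show ?thesis by (simp add: MU_def emeasure_eq_ennreal_measure)
  qed
qed

lemma Y1:
  assumes sf: "simple_fun M f" and q: "q > 0"
  shows "(\<integral>\<^sup>+ y. ennreal (if P (f y) then \<bar>f y\<bar> powr q else 0) \<partial>M)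
       = ennreal (\<Sum>v\<in>{v\<in>RR M f. P v}. \<bar>v\<bar> powr q * MU M f v)"
proof -
  note b = simple_fun_basic[OF sf]
  define A where "A v = {y\<in>space M. f y = v}" for v
  define S where "S = {v\<in>RR M f. P v}"
  have finS: "finite S" using b(1) by (simp add: S_def)
  have pw: "ennreal (if P (f y) then \<bar>f y\<bar> powr q else 0)
      = (\<Sum>v\<in>S. ennreal (\<bar>v\<bar> powr q) * indicator (A v) y)" if y: "y \<in> space M" for y
  proof (cases "f y \<noteq> 0 \<and> P (f y)")
    case True
    then have fyS: "f y \<in> S" using y by (auto simp: S_def RR_def)
    have "(\<Sum>v\<in>S. ennreal (\<bar>v\<bar> powr q) * indicator (A v) y)
        = (\<Sum>v\<in>{f y}. ennreal (\<bar>v\<bar> powr q) * indicator (A v) y)"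
      using fyS finS by (intro sum.mono_neutral_right) (auto simp: A_def indicator_def y)
    then show ?thesis using True y by (simp add: A_def indicator_def)
  next
    case False
    have "(\<Sum>v\<in>S. ennreal (\<bar>v\<bar> powr q) * indicator (A v) y) = 0"
      using False by (intro sum.neutral) (auto simp: A_def indicator_def S_def RR_def)
    then show ?thesis using False q by auto
  qed
  have "(\<integral>\<^sup>+ y. ennreal (if P (f y) then \<bar>f y\<bar> powr q else 0) \<partial>M)
      = (\<integral>\<^sup>+ y. (\<Sum>v\<in>S. ennreal (\<bar>v\<bar> powr q) * indicator (A v) y) \<partial>M)"
    using pw by (intro nn_integral_cong) auto
  also have "\<dots> = (\<Sum>v\<in>S. \<integral>\<^sup>+ y. ennreal (\<bar>v\<bar> powr q) * indicator (A v) y \<partial>M)"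
    using b(4) by (intro nn_integral_sum) (auto simp: S_def A_def)
  also have "\<dots> = (\<Sum>v\<in>S. ennreal (\<bar>v\<bar> powr q * MU M f v))"
    using b(4,5) by (intro sum.cong refl) (auto simp: S_def A_def nn_integral_cmult_indicator ennreal_mult)
  also have "\<dots> = ennreal (\<Sum>v\<in>S. \<bar>v\<bar> powr q * MU M f v)"
    by (intro sum_ennreal) (auto simp: MU_def)
  finally show ?thesis by (simp add: S_def)
qed

lemma simple_fun_comp:
  assumes sf: "simple_fun M f" and g0: "g 0 = 0"
  shows "simple_fun M (\<lambda>y. g (f y))"
proof -
  have sfn: "simple_function M f" and fin: "emeasure M {y \<in> space M. f y \<noteq> 0} < \<infinity>"
    using sf by (auto simp: simple_fun_def)
  have s2: "simple_function M (\<lambda>y. g (f y))" using sfn by (rule simple_function_compose1)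
  have bm: "f \<in> borel_measurable M" using sfn by (rule borel_measurable_simple_function)
  have nz: "{y \<in> space M. f y \<noteq> 0} \<in> sets M" using bm by measurable
  have "emeasure M {y \<in> space M. g (f y) \<noteq> 0} \<le> emeasure M {y \<in> space M. f y \<noteq> 0}"
    using nz g0 by (intro emeasure_mono) auto
  then show ?thesis using s2 fin by (auto simp: simple_fun_def)
qed

lemma Lp_simple:
  assumes sf: "simple_fun M f" and q: "q > 0"
  shows "Lp_norm M q f = ennreal (Spf (RR M f) (MU M f) q powr (1/q))"
proof -
  have "(\<integral>\<^sup>+ y. ennreal (\<bar>f y\<bar> powr q) \<partial>M) = (\<integral>\<^sup>+ y. ennreal (if True then \<bar>f y\<bar> powr q else 0) \<partial>M)"
    by simp
  also have "\<dots> = ennreal (Spf (RR M f) (MU M f) q)"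
    using Y1[OF sf q, of "\<lambda>_. True"] by (simp add: Spf_def)
  finally have e: "(\<integral>\<^sup>+ y. ennreal (\<bar>f y\<bar> powr q) \<partial>M) = ennreal (Spf (RR M f) (MU M f) q)" .
  have "Spf (RR M f) (MU M f) q \<ge> 0" unfolding Spf_def MU_def by (intro sum_nonneg) auto
  then show ?thesis unfolding Lp_norm_def e by (simp add: Let_def)
qed

lemma Lp_f0:
  assumes sf: "simple_fun M f"
  shows "Lp_norm M 1 (\<lambda>y. if l < \<bar>f y\<bar> then f y else 0) = ennreal (S1f (RR M f) (MU M f) l)"
proof -
  have "(\<integral>\<^sup>+ y. ennreal (\<bar>if l < \<bar>f y\<bar> then f y else 0\<bar> powr 1) \<partial>M)
     = (\<integral>\<^sup>+ y. ennreal (if l < \<bar>f y\<bar> then \<bar>f y\<bar> powr 1 else 0) \<partial>M)"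
    by (intro nn_integral_cong) auto
  also have "\<dots> = ennreal (\<Sum>v\<in>{v\<in>RR M f. l < \<bar>v\<bar>}. \<bar>v\<bar> powr 1 * MU M f v)"
    using Y1[OF sf, of 1 "\<lambda>z. l < \<bar>z\<bar>"] by simp
  also have "(\<Sum>v\<in>{v\<in>RR M f. l < \<bar>v\<bar>}. \<bar>v\<bar> powr 1 * MU M f v) = S1f (RR M f) (MU M f) l"
    unfolding S1f_def by (intro sum.cong refl) (auto simp: RR_def)
  finally have e: "(\<integral>\<^sup>+ y. ennreal (\<bar>if l < \<bar>f y\<bar> then f y else 0\<bar> powr 1) \<partial>M) = ennreal (S1f (RR M f) (MU M f) l)" .
  have "S1f (RR M f) (MU M f) l \<ge> 0" unfolding S1f_def MU_def by (intro sum_nonneg) auto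
  then show ?thesis unfolding Lp_norm_def e by (simp add: Let_def)
qed

lemma Lp_f1:
  assumes sf: "simple_fun M f"
  shows "Lp_norm M 2 (\<lambda>y. if l < \<bar>f y\<bar> then 0 else f y) = ennreal (S2f (RR M f) (MU M f) l powr (1/2))"
proof -
  have "(\<integral>\<^sup>+ y. ennreal (\<bar>if l < \<bar>f y\<bar> then 0 else f y\<bar> powr 2) \<partial>M)
     = (\<integral>\<^sup>+ y. ennreal (if \<bar>f y\<bar> \<le> l then \<bar>f y\<bar> powr 2 else 0) \<partial>M)"
    by (intro nn_integral_cong) auto
  also have "\<dots> = ennreal (S2f (RR M f) (MU M f) l)"
    using Y1[OF sf, of 2 "\<lambda>z. \<bar>z\<bar> \<le> l"] by (simp add: S2f_def)
  finally have e: "(\<integral>\<^sup>+ y. ennreal (\<bar>if l < \<bar>f y\<bar> then 0 else f y\<bar> powr 2) \<partial>M) = ennreal (S2f (RR M f) (MU M f) l)" .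
  have "S2f (RR M f) (MU M f) l \<ge> 0" unfolding S2f_def MU_def by (intro sum_nonneg) auto
  then show ?thesis unfolding Lp_norm_def e by (simp add: Let_def)
qed

definition Ann :: "int \<Rightarrow> 'a::euclidean_space set" where
  "Ann k = {x. 2 powr real_of_int k \<le> norm x \<and> norm x < 2 powr real_of_int (k + 1)}"

definition KA :: "nat \<Rightarrow> real \<Rightarrow> real" where
  "KA n e = max 1 (2 powr e) * 2 powr real n * unit_ball_vol (real n)"

lemma KA_pos: "KA n e > 0"
  by (simp add: KA_def)

lemma Ann_borel[measurable]: "Ann k \<in> sets (borel :: 'a::euclidean_space measure)"
  unfolding Ann_def by measurable

lemma borel_to_lebesgue:
  assumes "h \<in> borel_measurable (borel :: 'a::euclidean_space measure)"
  shows "h \<in> borel_measurable (lebesgue :: 'a::euclidean_space measure)"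
proof -
  have "h \<in> lborel \<rightarrow>\<^sub>M borel" using assms by (simp only: measurable_lborel2)
  then show ?thesis by (rule measurable_completion)
qed

lemma norm_powr_leb[measurable]: "(\<lambda>x::'a::euclidean_space. norm x powr e) \<in> borel_measurable lebesgue"
  by (intro borel_to_lebesgue) measurable

lemma Ann_leb[measurable]: "Ann k \<in> sets (lebesgue :: 'a::euclidean_space measure)"
proof -
  have "Ann k \<in> sets (lborel :: 'a measure)" using Ann_borel[where 'a='a] by (simp only: sets_lborel)
  then show ?thesis by (rule sets_completionI_sets)
qed

lemma X2:
  "(\<integral>\<^sup>+x. indicator (Ann k) x * ennreal (norm (x::'a::euclidean_space) powr e) \<partial>lebesgue)
     \<le> ennreal (KA DIM('a) e * 2 powr (real_of_int k * (e + real DIM('a))))"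
proof -
  define r where "r = (2::real) powr real_of_int (k + 1)"
  define c where "c = 2 powr (real_of_int k * e) * max 1 (2 powr e)"
  have r0: "r > 0" by (simp add: r_def)
  have pw: "indicator (Ann k) x * ennreal (norm x powr e) \<le> ennreal c * indicator (cball 0 r) x" for x :: 'a
  proof (cases "x \<in> Ann k")
    case True
    then have x1: "2 powr real_of_int k \<le> norm x" and x2: "norm x < r" by (auto simp: Ann_def r_def)
    have xp: "norm x > 0" using x1 by (smt (verit) powr_gt_zero)
    have "norm x powr e \<le> c"
    proof (cases "e \<ge> 0")
      case True
      then have "norm x powr e \<le> r powr e" using x2 by (intro powr_mono2) auto
      also have "r powr e = 2 powr (real_of_int k * e) * 2 powr e"
        by (simp add: r_def powr_powr powr_add[symmetric] algebra_simps)
      also have "\<dots> \<le> c" unfolding c_def by (intro mult_left_mono) auto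
      finally show ?thesis .
    next
      case False
      then have "norm x powr e \<le> (2 powr real_of_int k) powr e" using x1 by (intro powr_mono2') auto
      also have "\<dots> = 2 powr (real_of_int k * e) * 1" by (simp add: powr_powr)
      also have "\<dots> \<le> c" unfolding c_def by (intro mult_left_mono) auto
      finally show ?thesis .
    qed
    then show ?thesis using True x2 by (auto simp: indicator_def intro: ennreal_leI)
  qed (simp add: indicator_def)
  have "(\<integral>\<^sup>+x. indicator (Ann k) x * ennreal (norm (x::'a) powr e) \<partial>lebesgue)
      \<le> (\<integral>\<^sup>+x. ennreal c * indicator (cball 0 r) x \<partial>(lebesgue :: 'a measure))"
    by (rule nn_integral_mono) (rule pw)
  also have "\<dots> = ennreal c * emeasure lborel (cball (0::'a) r)"
    by (simp add: nn_integral_cmult_indicator)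
  also have "\<dots> = ennreal c * ennreal (unit_ball_vol (real DIM('a)) * r ^ DIM('a))"
    using r0 by (simp add: emeasure_cball)
  also have "\<dots> = ennreal (KA DIM('a) e * 2 powr (real_of_int k * (e + real DIM('a))))"
  proof -
    have "r ^ DIM('a) = 2 powr (real_of_int (k + 1) * real DIM('a))"
      by (simp add: r_def powr_realpow[symmetric] powr_powr)
    then have "c * (unit_ball_vol (real DIM('a)) * r ^ DIM('a)) = KA DIM('a) e * 2 powr (real_of_int k * (e + real DIM('a)))"
      by (simp add: c_def KA_def powr_add[symmetric] algebra_simps)
    moreover have "c \<ge> 0" by (simp add: c_def)
    moreover have "ennreal c * ennreal (unit_ball_vol (real DIM('a)) * r ^ DIM('a)) = ennreal (c * (unit_ball_vol (real DIM('a)) * r ^ DIM('a)))"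
      by (rule ennreal_mult[symmetric]) (use r0 \<open>c \<ge> 0\<close> in auto)
    ultimately show ?thesis by simp
  qed
  finally show ?thesis .
qed

lemma holder_nn:
  fixes F G :: "'a \<Rightarrow> real"
  assumes Fm: "F \<in> borel_measurable M" and Gm: "G \<in> borel_measurable M"
    and F0: "\<And>x. F x \<ge> 0" and G0: "\<And>x. G x \<ge> 0"
    and IF: "(\<integral>\<^sup>+x. ennreal (F x) \<partial>M) \<le> ennreal a" and IG: "(\<integral>\<^sup>+x. ennreal (G x) \<partial>M) \<le> ennreal b"
    and a: "a \<ge> 0" and b: "b \<ge> 0" and \<alpha>: "0 < \<alpha>" "\<alpha> < 1"
  shows "(\<integral>\<^sup>+x. ennreal (F x powr \<alpha> * G x powr (1 - \<alpha>)) \<partial>M) \<le> ennreal (a powr \<alpha> * b powr (1 - \<alpha>))"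
proof (cases "a = 0 \<or> b = 0")
  case True
  have "AE x in M. F x powr \<alpha> * G x powr (1 - \<alpha>) = 0"
    using True
  proof
    assume "a = 0"
    then have "(\<integral>\<^sup>+x. ennreal (F x) \<partial>M) = 0" using IF by simp
    then have "AE x in M. ennreal (F x) = 0" using Fm by (subst (asm) nn_integral_0_iff_AE) auto
    then show ?thesis by (rule eventually_mono) (use F0 in auto)
  next
    assume "b = 0"
    then have "(\<integral>\<^sup>+x. ennreal (G x) \<partial>M) = 0" using IG by simp
    then have "AE x in M. ennreal (G x) = 0" using Gm by (subst (asm) nn_integral_0_iff_AE) auto
    then show ?thesis by (rule eventually_mono) (use G0 \<alpha> in auto)
  qed
  then have "(\<integral>\<^sup>+x. ennreal (F x powr \<alpha> * G x powr (1 - \<alpha>)) \<partial>M) = (\<integral>\<^sup>+x. 0 \<partial>M)"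
    by (intro nn_integral_cong_AE) auto
  then show ?thesis by simp
next
  case False
  then have ap: "a > 0" and bp: "b > 0" using a b by auto
  define K where "K = a powr \<alpha> * b powr (1 - \<alpha>)"
  have K0: "K \<ge> 0" by (simp add: K_def)
  have pw: "F x powr \<alpha> * G x powr (1 - \<alpha>) \<le> K * (\<alpha> / a * F x + (1 - \<alpha>) / b * G x)" for x
  proof -
    have "F x powr \<alpha> * G x powr (1 - \<alpha>) = K * ((F x / a) powr \<alpha> * (G x / b) powr (1 - \<alpha>))"
      using ap bp F0[of x] G0[of x] by (simp add: K_def powr_divide)
    also have "\<dots> \<le> K * (\<alpha> * (F x / a) + (1 - \<alpha>) * (G x / b))"
      using young0[of \<alpha> "F x / a" "G x / b"] \<alpha> ap bp F0[of x] G0[of x] K0 by (intro mult_left_mono) auto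
    finally show ?thesis by simp
  qed
  have "(\<integral>\<^sup>+x. ennreal (F x powr \<alpha> * G x powr (1 - \<alpha>)) \<partial>M)
      \<le> (\<integral>\<^sup>+x. ennreal K * (ennreal (\<alpha> / a) * ennreal (F x) + ennreal ((1 - \<alpha>) / b) * ennreal (G x)) \<partial>M)"
  proof (intro nn_integral_mono)
    fix x
    have "ennreal (F x powr \<alpha> * G x powr (1 - \<alpha>)) \<le> ennreal (K * (\<alpha> / a * F x + (1 - \<alpha>) / b * G x))"
      using pw by (intro ennreal_leI)
    also have "\<dots> = ennreal K * (ennreal (\<alpha> / a) * ennreal (F x) + ennreal ((1 - \<alpha>) / b) * ennreal (G x))"
      using K0 \<alpha> ap bp F0[of x] G0[of x]
      by (simp add: ennreal_mult[symmetric] ennreal_plus[symmetric] del: ennreal_plus)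
    finally show "ennreal (F x powr \<alpha> * G x powr (1 - \<alpha>)) \<le> ennreal K * (ennreal (\<alpha> / a) * ennreal (F x) + ennreal ((1 - \<alpha>) / b) * ennreal (G x))" .
  qed
  also have "\<dots> = ennreal K * (ennreal (\<alpha> / a) * (\<integral>\<^sup>+x. ennreal (F x) \<partial>M) + ennreal ((1 - \<alpha>) / b) * (\<integral>\<^sup>+x. ennreal (G x) \<partial>M))"
    using Fm Gm by (simp add: nn_integral_cmult nn_integral_add)
  also have "\<dots> \<le> ennreal K * (ennreal (\<alpha> / a) * ennreal a + ennreal ((1 - \<alpha>) / b) * ennreal b)"
    using IF IG by (intro mult_left_mono add_mono) auto
  also have "\<dots> = ennreal K"
    using ap bp \<alpha> K0 by (simp add: ennreal_mult[symmetric] ennreal_plus[symmetric] del: ennreal_plus)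
  finally show ?thesis by (simp add: K_def)
qed

lemma sq_powr: "(y::real) \<ge> 0 \<Longrightarrow> (y ^ 2) powr \<alpha> = y powr (2 * \<alpha>)"
proof -
  assume y: "y \<ge> 0"
  then have h: "y ^ 2 = y powr 2" by simp
  have e: "(y powr 2) powr \<alpha> = y powr (2 * \<alpha>)" by (rule powr_powr)
  show ?thesis by (subst h) (rule e)
qed

lemma pow2conv:
  fixes a b p :: real
  assumes "a \<ge> 0" "b \<ge> 0" "p > 1"
  shows "(a + b) powr p \<le> 2 powr (p - 1) * (a powr p + b powr p)"
proof -
  define x where "x i = (if i = (0::nat) then a else b)" for i
  have "(\<Sum>i\<in>{0::nat,1}. 1 * x i) powr p \<le> (\<Sum>i\<in>{0::nat,1}. 1) powr (p - 1) * (\<Sum>i\<in>{0::nat,1}. 1 * x i powr p)"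
    using assms by (intro jensen_pow) (auto simp: x_def)
  then show ?thesis by (simp add: x_def)
qed

lemma X3:
  fixes g g0 g1 :: "'a::euclidean_space \<Rightarrow> real"
  assumes gm: "g \<in> borel_measurable lebesgue" "g0 \<in> borel_measurable lebesgue" "g1 \<in> borel_measurable lebesgue"
    and sub: "\<And>x. \<bar>g x\<bar> \<le> \<bar>g0 x\<bar> + \<bar>g1 x\<bar>"
    and h0: "AE x in lebesgue. \<bar>g0 x\<bar> \<le> c0" and c0: "c0 \<ge> 0"
    and h1: "(\<integral>\<^sup>+x. ennreal (\<bar>norm x powr a * g1 x\<bar> powr 2) \<partial>lebesgue) \<le> ennreal c2" and c2: "c2 \<ge> 0"
    and p: "1 < p" "p < 2"
  shows "(\<integral>\<^sup>+x. indicator (Ann k) x * ennreal (\<bar>norm x powr \<gamma> * g x\<bar> powr p) \<partial>lebesgue)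
     \<le> ennreal (2 powr (p - 1) * (c0 powr p * (KA DIM('a) (\<gamma> * p) * 2 powr (real_of_int k * (\<gamma> * p + real DIM('a))))
          + c2 powr (p/2) * (KA DIM('a) ((\<gamma> - a) * p / (1 - p/2)) * 2 powr (real_of_int k * ((\<gamma> - a) * p / (1 - p/2) + real DIM('a)))) powr (1 - p/2)))"
proof -
  define q where "q = (\<gamma> - a) * p / (1 - p/2)"
  define n where "n = DIM('a)"
  define T0 where "T0 x = indicator (Ann k) x * ennreal (\<bar>norm x powr \<gamma> * g0 x\<bar> powr p)" for x :: 'a
  define T1 where "T1 x = indicator (Ann k) x * ennreal (\<bar>norm x powr \<gamma> * g1 x\<bar> powr p)" for x :: 'a
  have T0m: "T0 \<in> borel_measurable lebesgue" unfolding T0_def using gm by measurable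
  have T1m: "T1 \<in> borel_measurable lebesgue" unfolding T1_def using gm by measurable
  have step1: "(\<integral>\<^sup>+x. indicator (Ann k) x * ennreal (\<bar>norm x powr \<gamma> * g x\<bar> powr p) \<partial>lebesgue)
      \<le> (\<integral>\<^sup>+x. ennreal (2 powr (p - 1)) * (T0 x + T1 x) \<partial>lebesgue)"
  proof (intro nn_integral_mono)
    fix x :: 'a
    have "\<bar>norm x powr \<gamma> * g x\<bar> \<le> \<bar>norm x powr \<gamma> * g0 x\<bar> + \<bar>norm x powr \<gamma> * g1 x\<bar>"
      using sub[of x] by (simp add: abs_mult distrib_left[symmetric] mult_left_mono)
    then have "\<bar>norm x powr \<gamma> * g x\<bar> powr p \<le> (\<bar>norm x powr \<gamma> * g0 x\<bar> + \<bar>norm x powr \<gamma> * g1 x\<bar>) powr p"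
      using p by (intro powr_mono2) auto
    also have "\<dots> \<le> 2 powr (p - 1) * (\<bar>norm x powr \<gamma> * g0 x\<bar> powr p + \<bar>norm x powr \<gamma> * g1 x\<bar> powr p)"
      using p by (intro pow2conv) auto
    finally have r: "\<bar>norm x powr \<gamma> * g x\<bar> powr p \<le> 2 powr (p - 1) * (\<bar>norm x powr \<gamma> * g0 x\<bar> powr p + \<bar>norm x powr \<gamma> * g1 x\<bar> powr p)" .
    show "indicator (Ann k) x * ennreal (\<bar>norm x powr \<gamma> * g x\<bar> powr p) \<le> ennreal (2 powr (p - 1)) * (T0 x + T1 x)"
    proof (cases "x \<in> Ann k")
      case True
      have "ennreal (\<bar>norm x powr \<gamma> * g x\<bar> powr p) \<le> ennreal (2 powr (p - 1) * (\<bar>norm x powr \<gamma> * g0 x\<bar> powr p + \<bar>norm x powr \<gamma> * g1 x\<bar> powr p))"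
        using r by (intro ennreal_leI)
      then show ?thesis using True
        by (simp add: T0_def T1_def ennreal_mult ennreal_plus[symmetric] del: ennreal_plus)
    qed (simp add: T0_def T1_def)
  qed
  also have "\<dots> = ennreal (2 powr (p - 1)) * ((\<integral>\<^sup>+x. T0 x \<partial>lebesgue) + (\<integral>\<^sup>+x. T1 x \<partial>lebesgue))"
    using T0m T1m by (simp add: nn_integral_cmult nn_integral_add)
  finally have step1': "(\<integral>\<^sup>+x. indicator (Ann k) x * ennreal (\<bar>norm x powr \<gamma> * g x\<bar> powr p) \<partial>lebesgue)
      \<le> ennreal (2 powr (p - 1)) * ((\<integral>\<^sup>+x. T0 x \<partial>lebesgue) + (\<integral>\<^sup>+x. T1 x \<partial>lebesgue))" .
  have I0: "(\<integral>\<^sup>+x. T0 x \<partial>lebesgue) \<le> ennreal (c0 powr p * (KA n (\<gamma> * p) * 2 powr (real_of_int k * (\<gamma> * p + real n))))"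
  proof -
    have "(\<integral>\<^sup>+x. T0 x \<partial>lebesgue) \<le> (\<integral>\<^sup>+x. ennreal (c0 powr p) * (indicator (Ann k) x * ennreal (norm (x::'a) powr (\<gamma> * p))) \<partial>lebesgue)"
    proof (intro nn_integral_mono_AE)
      show "AE x in lebesgue. T0 x \<le> ennreal (c0 powr p) * (indicator (Ann k) x * ennreal (norm (x::'a) powr (\<gamma> * p)))"
        using h0
      proof (rule eventually_mono)
        fix x :: 'a assume hx: "\<bar>g0 x\<bar> \<le> c0"
        have "\<bar>norm x powr \<gamma> * g0 x\<bar> powr p = norm (x::'a) powr (\<gamma> * p) * \<bar>g0 x\<bar> powr p"
          by (simp add: abs_mult powr_mult powr_powr)
        also have "\<dots> \<le> norm (x::'a) powr (\<gamma> * p) * c0 powr p"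
          using hx p by (intro mult_left_mono powr_mono2) auto
        finally have "ennreal (\<bar>norm x powr \<gamma> * g0 x\<bar> powr p) \<le> ennreal (c0 powr p) * ennreal (norm (x::'a) powr (\<gamma> * p))"
          by (subst ennreal_mult[symmetric]) (auto intro!: ennreal_leI simp: mult.commute)
        then show "T0 x \<le> ennreal (c0 powr p) * (indicator (Ann k) x * ennreal (norm (x::'a) powr (\<gamma> * p)))"
          by (cases "x \<in> Ann k") (auto simp: T0_def)
      qed
    qed
    also have "\<dots> = ennreal (c0 powr p) * (\<integral>\<^sup>+x. indicator (Ann k) x * ennreal (norm (x::'a) powr (\<gamma> * p)) \<partial>lebesgue)"
      by (intro nn_integral_cmult) measurable
    also have "\<dots> \<le> ennreal (c0 powr p) * ennreal (KA n (\<gamma> * p) * 2 powr (real_of_int k * (\<gamma> * p + real n)))"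
      unfolding n_def by (intro mult_left_mono X2) auto
    also have "\<dots> = ennreal (c0 powr p * (KA n (\<gamma> * p) * 2 powr (real_of_int k * (\<gamma> * p + real n))))"
      using KA_pos[of n "\<gamma> * p"] by (simp add: ennreal_mult)
    finally show ?thesis .
  qed
  define \<alpha> where "\<alpha> = p / 2"
  have \<alpha>: "0 < \<alpha>" "\<alpha> < 1" using p by (auto simp: \<alpha>_def)
  define F where "F x = indicator (Ann k) x * \<bar>norm x powr a * g1 x\<bar> powr 2" for x :: 'a
  define G where "G x = indicator (Ann k) x * norm (x::'a) powr q" for x :: 'a
  have Fm: "F \<in> borel_measurable lebesgue" unfolding F_def using gm by measurable
  have Gm: "G \<in> borel_measurable lebesgue" unfolding G_def by measurable
  have T1eq: "T1 x = ennreal (F x powr \<alpha> * G x powr (1 - \<alpha>))" for x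
  proof (cases "x \<in> Ann k")
    case True
    then have nx: "norm x > 0" unfolding Ann_def by (smt (verit) mem_Collect_eq powr_gt_zero)
    have "F x powr \<alpha> * G x powr (1 - \<alpha>) = (norm x powr a * \<bar>g1 x\<bar>) powr (2 * \<alpha>) * norm x powr (q * (1 - \<alpha>))"
      using True nx by (simp add: F_def G_def abs_mult powr_powr sq_powr)
    also have "\<dots> = norm x powr (a * p) * \<bar>g1 x\<bar> powr p * norm x powr ((\<gamma> - a) * p)"
    proof -
      have "q * (1 - \<alpha>) = (\<gamma> - a) * p" using p by (simp add: q_def \<alpha>_def field_simps)
      moreover have "2 * \<alpha> = p" by (simp add: \<alpha>_def)
      ultimately show ?thesis using nx by (simp add: powr_mult powr_powr)
    qed
    also have "\<dots> = \<bar>norm x powr \<gamma> * g1 x\<bar> powr p"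
    proof -
      have "norm x powr (a * p) * norm x powr ((\<gamma> - a) * p) = norm (x::'a) powr (\<gamma> * p)"
        by (simp add: powr_add[symmetric] algebra_simps)
      then show ?thesis using nx by (simp add: abs_mult powr_mult powr_powr mult_ac)
    qed
    finally show ?thesis using True by (simp add: T1_def)
  next
    case False
    then show ?thesis using \<alpha> by (simp add: T1_def F_def G_def)
  qed
  have IF: "(\<integral>\<^sup>+x. ennreal (F x) \<partial>lebesgue) \<le> ennreal c2"
  proof -
    have "(\<integral>\<^sup>+x. ennreal (F x) \<partial>lebesgue) \<le> (\<integral>\<^sup>+x. ennreal (\<bar>norm x powr a * g1 x\<bar> powr 2) \<partial>lebesgue)"
      by (intro nn_integral_mono) (auto simp: F_def indicator_def)
    then show ?thesis using h1 by simp
  qed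
  have IG: "(\<integral>\<^sup>+x. ennreal (G x) \<partial>lebesgue) \<le> ennreal (KA n q * 2 powr (real_of_int k * (q + real n)))"
  proof -
    have "(\<integral>\<^sup>+x. ennreal (G x) \<partial>lebesgue) = (\<integral>\<^sup>+x. indicator (Ann k) x * ennreal (norm (x::'a) powr q) \<partial>lebesgue)"
      by (intro nn_integral_cong) (auto simp: G_def indicator_def)
    also have "\<dots> \<le> ennreal (KA n q * 2 powr (real_of_int k * (q + real n)))"
      unfolding n_def by (rule X2)
    finally show ?thesis .
  qed
  have I1: "(\<integral>\<^sup>+x. T1 x \<partial>lebesgue) \<le> ennreal (c2 powr \<alpha> * (KA n q * 2 powr (real_of_int k * (q + real n))) powr (1 - \<alpha>))"
    unfolding T1eq
    using KA_pos[of n q] c2 \<alpha>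
    by (intro holder_nn[OF Fm Gm _ _ IF IG]) (auto simp: F_def G_def)
  have "(\<integral>\<^sup>+x. indicator (Ann k) x * ennreal (\<bar>norm x powr \<gamma> * g x\<bar> powr p) \<partial>lebesgue)
      \<le> ennreal (2 powr (p - 1)) * (ennreal (c0 powr p * (KA n (\<gamma> * p) * 2 powr (real_of_int k * (\<gamma> * p + real n))))
           + ennreal (c2 powr \<alpha> * (KA n q * 2 powr (real_of_int k * (q + real n))) powr (1 - \<alpha>)))"
    using step1' I0 I1 by (meson add_mono mult_left_mono order_trans zero_le)
  also have "\<dots> = ennreal (2 powr (p - 1) * (c0 powr p * (KA n (\<gamma> * p) * 2 powr (real_of_int k * (\<gamma> * p + real n)))
           + c2 powr \<alpha> * (KA n q * 2 powr (real_of_int k * (q + real n))) powr (1 - \<alpha>)))"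
    using KA_pos[of n q] KA_pos[of n "\<gamma> * p"]
    by (simp add: ennreal_mult[symmetric] ennreal_plus[symmetric] del: ennreal_plus)
  finally show ?thesis by (simp add: \<alpha>_def q_def n_def)
qed

lemma expo1:
  fixes a \<theta> n :: real
  assumes "0 < \<theta>" "\<theta> < 1"
  shows "(a * \<theta> - (1 - \<theta>) * n) * (2 / (2 - \<theta>)) + n = (2 / (2 - \<theta>)) * \<theta> * ((2 * a + n) / 2)"
  using assms by (simp add: field_simps)

lemma expo2:
  fixes a \<theta> n :: real
  assumes "0 < \<theta>" "\<theta> < 1"
  shows "((a * \<theta> - (1 - \<theta>) * n - a) * (2 / (2 - \<theta>)) / (1 - (2 / (2 - \<theta>)) / 2) + n) * (1 - (2 / (2 - \<theta>)) / 2)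
     = - ((2 - 2 / (2 - \<theta>)) * ((2 * a + n) / 2))"
proof -
  define p where "p = 2 / (2 - \<theta>)"
  have "2 - \<theta> \<noteq> 0" using assms by simp
  then have pp: "p * (2 - \<theta>) = 2" by (simp add: p_def field_simps)
  have p2: "1 - p / 2 \<noteq> 0" using assms by (simp add: p_def field_simps)
  have "((a * \<theta> - (1 - \<theta>) * n - a) * p / (1 - p / 2) + n) * (1 - p / 2)
      = (a * \<theta> - (1 - \<theta>) * n - a) * p + n * (1 - p / 2)"
    using p2 by (simp add: field_simps)
  also have "\<dots> = - ((2 - p) * ((2 * a + n) / 2)) - (a + n) * (p * (2 - \<theta>) - 2)"
    by (simp add: algebra_simps) (simp add: field_simps)
  also have "\<dots> = - ((2 - p) * ((2 * a + n) / 2))" using pp by simp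
  finally show ?thesis by (simp add: p_def)
qed

lemma ident1:
  fixes A B S t \<theta> p :: real
  assumes A: "A > 0" and B: "B > 0" and S: "S \<ge> 0"
  shows "(A * S) powr p * 2 powr (t * (p * \<theta>))
       = A powr (p * (1 - \<theta>)) * B powr (p * \<theta>) * ((B / A * 2 powr (-t)) powr (-\<theta>) * S) powr p"
proof -
  have e1: "((B / A * 2 powr (-t)) powr (-\<theta>) * S) powr p = (B / A * 2 powr (-t)) powr (-\<theta> * p) * S powr p"
    using A B S by (simp add: powr_mult powr_powr)
  have e2: "(B / A * 2 powr (-t)) powr (-\<theta> * p) = (B / A) powr (-\<theta> * p) * (2 powr (-t)) powr (-\<theta> * p)"
    by (rule powr_mult)
  have e3: "(B / A) powr (-\<theta> * p) = B powr (-\<theta> * p) * A powr (\<theta> * p)"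
    using A B by (simp add: powr_divide powr_minus_divide)
  have e4: "(2 powr (-t)) powr (-\<theta> * p) = 2 powr (t * \<theta> * p)"
    by (simp add: powr_powr mult_ac)
  have "((B / A * 2 powr (-t)) powr (-\<theta>) * S) powr p
      = B powr (-\<theta> * p) * A powr (\<theta> * p) * 2 powr (t * \<theta> * p) * S powr p"
    unfolding e1 e2 e3 e4 by (simp add: mult_ac)
  then have "A powr (p * (1 - \<theta>)) * B powr (p * \<theta>) * ((B / A * 2 powr (-t)) powr (-\<theta>) * S) powr p
      = (A powr (p * (1 - \<theta>)) * A powr (\<theta> * p)) * (B powr (p * \<theta>) * B powr (-\<theta> * p)) * 2 powr (t * \<theta> * p) * S powr p"
    by (simp add: mult_ac)
  also have "\<dots> = A powr p * 2 powr (t * \<theta> * p) * S powr p"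
    using A B by (simp add: powr_add[symmetric] algebra_simps)
  finally have X: "A powr (p * (1 - \<theta>)) * B powr (p * \<theta>) * ((B / A * 2 powr (-t)) powr (-\<theta>) * S) powr p
     = A powr p * 2 powr (t * \<theta> * p) * S powr p" .
  have Y: "(A * S) powr p * 2 powr (t * (p * \<theta>)) = A powr p * 2 powr (t * \<theta> * p) * S powr p"
    by (simp add: powr_mult mult_ac)
  show ?thesis by (simp only: X Y)
qed

lemma ident2:
  fixes A B S t \<theta> p :: real
  assumes A: "A > 0" and B: "B > 0" and S: "S \<ge> 0" and p: "2 - p = p * (1 - \<theta>)"
  shows "(B\<^sup>2 * S) powr (p/2) * 2 powr (- ((2 - p) * t))
       = A powr (p * (1 - \<theta>)) * B powr (p * \<theta>) * ((B / A * 2 powr (-t)) powr (2 - p) * S powr (p/2))"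
proof -
  have e2: "(B / A * 2 powr (-t)) powr (2 - p) = (B / A) powr (2 - p) * (2 powr (-t)) powr (2 - p)"
    by (rule powr_mult)
  have e3: "(B / A) powr (2 - p) = B powr (2 - p) * A powr (-(2 - p))"
  proof -
    have "A powr (-(2 - p)) = 1 / A powr (2 - p)" by (rule powr_minus_divide)
    then show ?thesis using A B by (simp add: powr_divide)
  qed
  have e4: "(2 powr (-t)) powr (2 - p) = 2 powr (-((2 - p) * t))"
    by (simp add: powr_powr mult_ac)
  have "(B / A * 2 powr (-t)) powr (2 - p) = B powr (2 - p) * A powr (-(2 - p)) * 2 powr (-((2 - p) * t))"
    unfolding e2 e3 e4 by simp
  then have "A powr (p * (1 - \<theta>)) * B powr (p * \<theta>) * ((B / A * 2 powr (-t)) powr (2 - p) * S powr (p/2))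
     = (A powr (p * (1 - \<theta>)) * A powr (-(2 - p))) * (B powr (p * \<theta>) * B powr (2 - p)) * 2 powr (-((2 - p) * t)) * S powr (p/2)"
    by (simp add: mult_ac)
  also have "A powr (p * (1 - \<theta>)) * A powr (-(2 - p)) = 1"
    using A p by (simp add: powr_add[symmetric])
  also have "B powr (p * \<theta>) * B powr (2 - p) = B powr p"
    using B p by (simp add: powr_add[symmetric] algebra_simps)
  finally have X: "A powr (p * (1 - \<theta>)) * B powr (p * \<theta>) * ((B / A * 2 powr (-t)) powr (2 - p) * S powr (p/2))
     = 1 * B powr p * 2 powr (-((2 - p) * t)) * S powr (p/2)" .
  have "(B\<^sup>2 * S) powr (p/2) = B powr p * S powr (p/2)"
    using B S by (simp add: powr_mult sq_powr)
  then have Y: "(B\<^sup>2 * S) powr (p/2) * 2 powr (- ((2 - p) * t)) = 1 * B powr p * 2 powr (-((2 - p) * t)) * S powr (p/2)"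
    by simp
  show ?thesis by (simp only: X Y)
qed

lemma L2_extract:
  assumes "Lp_norm N 2 h \<le> ennreal B * ennreal (S powr (1/2))" "B \<ge> 0" "S \<ge> 0"
  shows "(\<integral>\<^sup>+x. ennreal (\<bar>h x\<bar> powr 2) \<partial>N) \<le> ennreal (B\<^sup>2 * S)"
proof -
  define I where "I = (\<integral>\<^sup>+x. ennreal (\<bar>h x\<bar> powr 2) \<partial>N)"
  have R: "ennreal B * ennreal (S powr (1/2)) = ennreal (B * S powr (1/2))"
    using assms by (simp add: ennreal_mult)
  have "I \<noteq> \<infinity>"
  proof
    assume "I = \<infinity>"
    then have "Lp_norm N 2 h = \<infinity>" by (simp add: Lp_norm_def I_def)
    then show False using assms(1) R by (simp add: top_unique)
  qed
  then have "Lp_norm N 2 h = ennreal (enn2real I powr (1/2))" by (simp add: Lp_norm_def I_def Let_def)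
  then have "ennreal (enn2real I powr (1/2)) \<le> ennreal (B * S powr (1/2))" using assms(1) R by simp
  then have le: "enn2real I powr (1/2) \<le> B * S powr (1/2)"
    using assms by (subst (asm) ennreal_le_iff) auto
  have "enn2real I = (enn2real I powr (1/2)) powr 2" by (simp add: powr_powr)
  also have "\<dots> \<le> (B * S powr (1/2)) powr 2" using le by (intro powr_mono2) auto
  also have "\<dots> = B\<^sup>2 * S" using assms by (simp add: powr_mult powr_powr)
  finally have "enn2real I \<le> B\<^sup>2 * S" .
  then have "ennreal (enn2real I) \<le> ennreal (B\<^sup>2 * S)" by (rule ennreal_leI)
  moreover have "ennreal (enn2real I) = I" using \<open>I \<noteq> \<infinity>\<close> by (simp add: less_top)
  ultimately show ?thesis unfolding I_def[symmetric] by simp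
qed

lemma Linf_extract:
  assumes "Linf_norm N h \<le> ennreal A * ennreal S" "A \<ge> 0" "S \<ge> 0"
  shows "AE x in N. \<bar>h x\<bar> \<le> A * S"
proof -
  have "AE x in N. ennreal \<bar>h x\<bar> \<le> esssup N (\<lambda>x. ennreal \<bar>h x\<bar>)" by (rule esssup_AE)
  then show ?thesis
  proof (rule eventually_mono)
    fix x assume "ennreal \<bar>h x\<bar> \<le> esssup N (\<lambda>x. ennreal \<bar>h x\<bar>)"
    also have "\<dots> \<le> ennreal (A * S)" using assms by (simp add: Linf_norm_def ennreal_mult)
    finally show "\<bar>h x\<bar> \<le> A * S" using assms by (subst (asm) ennreal_le_iff) auto
  qed
qed

lemma Ann_disj: "x \<in> Ann k \<Longrightarrow> x \<in> Ann k' \<Longrightarrow> k = k'"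
proof -
  assume h: "x \<in> Ann k" "x \<in> Ann k'"
  have "2 powr real_of_int k \<le> norm x" "norm x < 2 powr real_of_int (k' + 1)" using h by (auto simp: Ann_def)
  then have "2 powr real_of_int k < 2 powr real_of_int (k' + 1)" by linarith
  then have "real_of_int k < real_of_int (k' + 1)" by (simp only: powr_less_cancel_iff)
  then have "k < k' + 1" by linarith
  moreover have "2 powr real_of_int k' \<le> norm x" "norm x < 2 powr real_of_int (k + 1)" using h by (auto simp: Ann_def)
  then have "2 powr real_of_int k' < 2 powr real_of_int (k + 1)" by linarith
  then have "real_of_int k' < real_of_int (k + 1)" by (simp only: powr_less_cancel_iff)
  then have "k' < k + 1" by linarith
  ultimately show "k = k'" by simp
qed

lemma Ann_cover: "x \<noteq> 0 \<Longrightarrow> x \<in> Ann \<lfloor>log 2 (norm x)\<rfloor>"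
proof -
  assume x: "x \<noteq> 0"
  then have nx: "norm x > 0" by simp
  have e: "2 powr (log 2 (norm x)) = norm x" using nx by simp
  have "2 powr real_of_int \<lfloor>log 2 (norm x)\<rfloor> \<le> 2 powr (log 2 (norm x))" by (intro powr_mono) auto
  moreover have "2 powr (log 2 (norm x)) < 2 powr real_of_int (\<lfloor>log 2 (norm x)\<rfloor> + 1)"
    by (intro powr_less_mono) linarith+
  ultimately show ?thesis using e by (simp add: Ann_def)
qed

definition Cfun :: "real \<Rightarrow> nat \<Rightarrow> real \<Rightarrow> real" where
  "Cfun a n \<theta> = (let p0 = 2 / (2 - \<theta>); \<beta> = 2 * a + real n; \<gamma> = a * \<theta> - (1 - \<theta>) * real n;
      q = (\<gamma> - a) * p0 / (1 - p0 / 2); \<rho> = (2::real) powr (-(\<beta> / 2));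
      Kc = 2 powr (p0 - 1) * max (KA n (\<gamma> * p0)) (KA n q powr (1 - p0 / 2))
    in (Kc * CS \<rho> \<theta>) powr (1 / p0))"

lemma CS_nonneg:
  assumes "\<rho> > 0" "0 < \<theta>" "\<theta> < 1"
  shows "CS \<rho> \<theta> \<ge> 0"
proof -
  define r where "r = max \<rho> (1/\<rho>)"
  have r1: "r \<ge> 1"
  proof (cases "\<rho> \<ge> 1")
    case True then show ?thesis by (simp add: r_def)
  next
    case False then have "1/\<rho> \<ge> 1" using assms by simp
    then show ?thesis by (simp add: r_def)
  qed
  define p where "p = 2 / (2 - \<theta>)"
  have p2: "p < 2" using assms by (simp add: p_def divide_less_eq)
  have p1: "p > 1" using assms by (simp add: p_def less_divide_eq)
  have "r powr (-\<theta>) \<le> 1" using r1 assms by (simp add: powr_le_one_le ge_one_powr_ge_zero powr_minus_divide)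
  then have c1: "CS1 r \<theta> \<ge> 0" by (simp add: CS1_def)
  have "r powr (-(2 - p)) \<le> r powr 0" using r1 p2 by (intro powr_mono) auto
  then have "r powr (-(2 - p)) \<le> 1" using r1 by simp
  moreover have "(2::real) powr (-(p * (1 - p/2))) < 1" using p1 p2 by (simp add: powr_less_one)
  ultimately have c2: "CS2 r \<theta> \<ge> 0" by (simp add: CS2_def p_def[symmetric] Let_def)
  show ?thesis using c1 c2 by (simp add: CS_def r_def)
qed

lemma Phi_nonneg: "Phi R \<mu> lam \<theta> \<sigma> \<ge> 0"
  by (simp add: Phi_def Let_def)

lemma ann_k:
  fixes T :: "('b \<Rightarrow> real) \<Rightarrow> ('x::euclidean_space \<Rightarrow> real)" and M :: "'b measure" and k :: int and a \<theta> A B :: real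
  assumes \<theta>: "0 < \<theta>" "\<theta> < 1" and A: "A > 0" and B: "B > 0"
    and sub: "sublinear_on (simple_fun M) T"
    and meas: "\<And>f. simple_fun M f \<Longrightarrow> T f \<in> borel_measurable lebesgue"
    and Linf: "\<And>f. simple_fun M f \<Longrightarrow> Linf_norm lebesgue (T f) \<le> ennreal A * Lp_norm M 1 f"
    and L2: "\<And>f. simple_fun M f \<Longrightarrow> Lp_norm lebesgue 2 (\<lambda>x. norm x powr a * T f x) \<le> ennreal B * Lp_norm M 2 f"
    and sf: "simple_fun M f"
  defines "p \<equiv> 2 / (2 - \<theta>)"
    and "\<gamma> \<equiv> a * \<theta> - (1 - \<theta>) * real DIM('x)"
    and "q \<equiv> (a * \<theta> - (1 - \<theta>) * real DIM('x) - a) * (2 / (2 - \<theta>)) / (1 - (2 / (2 - \<theta>)) / 2)"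
    and "\<sigma> \<equiv> B / A * 2 powr (- (real_of_int k * ((2 * a + real DIM('x)) / 2)))"
    and "Kc \<equiv> 2 powr (2 / (2 - \<theta>) - 1) * max (KA DIM('x) ((a * \<theta> - (1 - \<theta>) * real DIM('x)) * (2 / (2 - \<theta>))))
       (KA DIM('x) ((a * \<theta> - (1 - \<theta>) * real DIM('x) - a) * (2 / (2 - \<theta>)) / (1 - (2 / (2 - \<theta>)) / 2)) powr (1 - (2 / (2 - \<theta>)) / 2))"
  shows "(\<integral>\<^sup>+x. indicator (Ann k) x * ennreal (\<bar>norm x powr \<gamma> * T f x\<bar> powr p) \<partial>lebesgue)
     \<le> ennreal (Kc * (A powr (p * (1 - \<theta>)) * B powr (p * \<theta>)) *
          ((\<sigma> powr (-\<theta>) * S1f (RR M f) (MU M f) l) powr p + \<sigma> powr (2 - p) * S2f (RR M f) (MU M f) l powr (p/2)))"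
proof -
  define R where "R = RR M f"
  define \<mu> where "\<mu> = MU M f"
  define n where "n = real DIM('x)"
  define \<beta> where "\<beta> = 2 * a + n"
  define t where "t = real_of_int k * (\<beta> / 2)"
  have p1: "1 < p" and p2: "p < 2" using \<theta> by (auto simp: p_def less_divide_eq divide_less_eq)
  define f0 where "f0 = (\<lambda>y. if l < \<bar>f y\<bar> then f y else 0)"
  define f1 where "f1 = (\<lambda>y. if l < \<bar>f y\<bar> then 0 else f y)"
  have sf0: "simple_fun M f0" unfolding f0_def
    using simple_fun_comp[OF sf, of "\<lambda>z. if l < \<bar>z\<bar> then z else 0"] by simp
  have sf1: "simple_fun M f1" unfolding f1_def
    using simple_fun_comp[OF sf, of "\<lambda>z. if l < \<bar>z\<bar> then 0 else z"] by simp
  have feq: "(\<lambda>y. f0 y + f1 y) = f" by (auto simp: f0_def f1_def)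
  have subx: "\<bar>T f x\<bar> \<le> \<bar>T f0 x\<bar> + \<bar>T f1 x\<bar>" for x
    using sub sf0 sf1 unfolding sublinear_on_def feq[symmetric] by blast
  define S1 where "S1 = S1f R \<mu> l"
  define S2 where "S2 = S2f R \<mu> l"
  have S10: "S1 \<ge> 0" unfolding S1_def S1f_def \<mu>_def by (intro sum_nonneg) auto
  have S20: "S2 \<ge> 0" unfolding S2_def S2f_def \<mu>_def by (intro sum_nonneg) auto
  have h0: "AE x in lebesgue. \<bar>T f0 x\<bar> \<le> A * S1"
    using Linf[OF sf0] A S10 unfolding f0_def Lp_f0[OF sf] S1_def R_def \<mu>_def
    by (intro Linf_extract) auto
  have h1: "(\<integral>\<^sup>+x. ennreal (\<bar>norm x powr a * T f1 x\<bar> powr 2) \<partial>lebesgue) \<le> ennreal (B\<^sup>2 * S2)"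
    using L2[OF sf1] B S20 unfolding f1_def Lp_f1[OF sf] S2_def R_def \<mu>_def
    by (intro L2_extract) auto
  have X: "(\<integral>\<^sup>+x. indicator (Ann k) x * ennreal (\<bar>norm x powr \<gamma> * T f x\<bar> powr p) \<partial>lebesgue)
     \<le> ennreal (2 powr (p - 1) * ((A * S1) powr p * (KA DIM('x) (\<gamma> * p) * 2 powr (real_of_int k * (\<gamma> * p + real DIM('x))))
          + (B\<^sup>2 * S2) powr (p/2) * (KA DIM('x) ((\<gamma> - a) * p / (1 - p/2)) * 2 powr (real_of_int k * ((\<gamma> - a) * p / (1 - p/2) + real DIM('x)))) powr (1 - p/2)))"
    by (rule X3[OF meas[OF sf] meas[OF sf0] meas[OF sf1] subx h0 _ h1])
       (use A B S10 S20 p1 p2 in auto)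
  have q_eq: "(\<gamma> - a) * p / (1 - p/2) = q" by (simp add: q_def \<gamma>_def p_def)
  have e1: "real_of_int k * (\<gamma> * p + real DIM('x)) = t * (p * \<theta>)"
    using expo1[OF \<theta>, of a n] by (simp add: t_def \<gamma>_def p_def n_def \<beta>_def mult_ac)
  have e2: "real_of_int k * (q + real DIM('x)) * (1 - p/2) = - ((2 - p) * t)"
    using expo2[OF \<theta>, of a n] by (simp add: t_def q_def p_def n_def \<beta>_def mult_ac)
  have KA2: "(KA DIM('x) q * 2 powr (real_of_int k * (q + real DIM('x)))) powr (1 - p/2)
      = KA DIM('x) q powr (1 - p/2) * 2 powr (- ((2 - p) * t))"
    using KA_pos[of "DIM('x)" q] by (simp add: powr_mult powr_powr e2[symmetric])
  have \<sigma>t: "\<sigma> = B / A * 2 powr (-t)" by (simp add: \<sigma>_def t_def \<beta>_def n_def)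
  have pth: "2 - p = p * (1 - \<theta>)" using \<theta> by (simp add: p_def field_simps)
  have I1: "(A * S1) powr p * 2 powr (t * (p * \<theta>)) = A powr (p * (1 - \<theta>)) * B powr (p * \<theta>) * (\<sigma> powr (-\<theta>) * S1) powr p"
    unfolding \<sigma>t by (rule ident1[OF A B S10])
  have I2: "(B\<^sup>2 * S2) powr (p/2) * 2 powr (- ((2 - p) * t)) = A powr (p * (1 - \<theta>)) * B powr (p * \<theta>) * (\<sigma> powr (2 - p) * S2 powr (p/2))"
    unfolding \<sigma>t by (rule ident2[OF A B S20 pth])
  define AB where "AB = A powr (p * (1 - \<theta>)) * B powr (p * \<theta>)"
  have AB0: "AB \<ge> 0" by (simp add: AB_def)
  define X1 where "X1 = (\<sigma> powr (-\<theta>) * S1) powr p"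
  define X2 where "X2 = \<sigma> powr (2 - p) * S2 powr (p/2)"
  have X10: "X1 \<ge> 0" by (simp add: X1_def)
  have X20: "X2 \<ge> 0" by (simp add: X2_def)
  have "2 powr (p - 1) * ((A * S1) powr p * (KA DIM('x) (\<gamma> * p) * 2 powr (real_of_int k * (\<gamma> * p + real DIM('x))))
          + (B\<^sup>2 * S2) powr (p/2) * (KA DIM('x) ((\<gamma> - a) * p / (1 - p/2)) * 2 powr (real_of_int k * ((\<gamma> - a) * p / (1 - p/2) + real DIM('x)))) powr (1 - p/2))
      = 2 powr (p - 1) * (KA DIM('x) (\<gamma> * p) * ((A * S1) powr p * 2 powr (t * (p * \<theta>)))
          + KA DIM('x) q powr (1 - p/2) * ((B\<^sup>2 * S2) powr (p/2) * 2 powr (- ((2 - p) * t))))"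
    unfolding q_eq KA2 e1 by (simp add: mult_ac)
  also have "\<dots> = 2 powr (p - 1) * (KA DIM('x) (\<gamma> * p) * (AB * X1) + KA DIM('x) q powr (1 - p/2) * (AB * X2))"
    unfolding I1 I2 AB_def X1_def X2_def by (rule refl)
  also have "\<dots> \<le> 2 powr (p - 1) * (max (KA DIM('x) (\<gamma> * p)) (KA DIM('x) q powr (1 - p / 2)) * (AB * X1)
        + max (KA DIM('x) (\<gamma> * p)) (KA DIM('x) q powr (1 - p / 2)) * (AB * X2))"
    using AB0 X10 X20 by (intro mult_left_mono add_mono mult_right_mono) auto
  also have "\<dots> = Kc * AB * (X1 + X2)" by (simp add: Kc_def p_def \<gamma>_def q_def algebra_simps)
  finally have "2 powr (p - 1) * ((A * S1) powr p * (KA DIM('x) (\<gamma> * p) * 2 powr (real_of_int k * (\<gamma> * p + real DIM('x))))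
          + (B\<^sup>2 * S2) powr (p/2) * (KA DIM('x) ((\<gamma> - a) * p / (1 - p/2)) * 2 powr (real_of_int k * ((\<gamma> - a) * p / (1 - p/2) + real DIM('x)))) powr (1 - p/2))
      \<le> Kc * AB * (X1 + X2)" .
  then have "ennreal (2 powr (p - 1) * ((A * S1) powr p * (KA DIM('x) (\<gamma> * p) * 2 powr (real_of_int k * (\<gamma> * p + real DIM('x))))
          + (B\<^sup>2 * S2) powr (p/2) * (KA DIM('x) ((\<gamma> - a) * p / (1 - p/2)) * 2 powr (real_of_int k * ((\<gamma> - a) * p / (1 - p/2) + real DIM('x)))) powr (1 - p/2)))
      \<le> ennreal (Kc * AB * (X1 + X2))" by (rule ennreal_leI)
  with X show ?thesis by (simp add: AB_def X1_def X2_def S1_def S2_def R_def \<mu>_def)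
qed

lemma main_f:
  fixes T :: "('b \<Rightarrow> real) \<Rightarrow> ('x::euclidean_space \<Rightarrow> real)" and M :: "'b measure" and a \<theta> A B :: real
  assumes a: "a \<noteq> - real DIM('x) / 2"
    and \<theta>: "0 < \<theta>" "\<theta> < 1" and A: "A > 0" and B: "B > 0"
    and sub: "sublinear_on (simple_fun M) T"
    and meas: "\<And>f. simple_fun M f \<Longrightarrow> T f \<in> borel_measurable lebesgue"
    and Linf: "\<And>f. simple_fun M f \<Longrightarrow> Linf_norm lebesgue (T f) \<le> ennreal A * Lp_norm M 1 f"
    and L2: "\<And>f. simple_fun M f \<Longrightarrow> Lp_norm lebesgue 2 (\<lambda>x. norm x powr a * T f x) \<le> ennreal B * Lp_norm M 2 f"
    and sf: "simple_fun M f"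
  shows "Lp_norm lebesgue (2 / (2 - \<theta>)) (\<lambda>x. norm x powr (a * \<theta> - (1 - \<theta>) * real DIM('x)) * T f x)
     \<le> ennreal (Cfun a DIM('x) \<theta> * A powr (1 - \<theta>) * B powr \<theta>) * Lp_norm M (2 / (2 - \<theta>)) f"
proof -
  define p where "p = 2 / (2 - \<theta>)"
  define n where "n = real DIM('x)"
  define \<beta> where "\<beta> = 2 * a + n"
  define \<gamma> where "\<gamma> = a * \<theta> - (1 - \<theta>) * n"
  define q where "q = (\<gamma> - a) * p / (1 - p / 2)"
  define \<rho> where "\<rho> = (2::real) powr (-(\<beta> / 2))"
  define Kc where "Kc = 2 powr (p - 1) * max (KA DIM('x) (\<gamma> * p)) (KA DIM('x) q powr (1 - p / 2))"
  have p1: "1 < p" and p2: "p < 2" using \<theta> by (auto simp: p_def less_divide_eq divide_less_eq)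
  have Kc0: "Kc \<ge> 0" unfolding Kc_def using KA_pos[of "DIM('x)" "\<gamma> * p"] by (simp add: max_def)
  have \<beta>0: "\<beta> \<noteq> 0" using a by (simp add: \<beta>_def n_def)
  have \<rho>0: "\<rho> > 0" by (simp add: \<rho>_def)
  have \<rho>1: "\<rho> \<noteq> 1" using \<beta>0 by (simp add: \<rho>_def)
  define R where "R = RR M f"
  define \<mu> where "\<mu> = MU M f"
  note sb = simple_fun_basic[OF sf]
  have finR: "finite R" and R0: "0 \<notin> R" using sb by (auto simp: R_def)
  have \<mu>0: "\<And>v. v \<in> R \<Longrightarrow> \<mu> v \<ge> 0" by (simp add: \<mu>_def)
  define lam where "lam \<sigma> = (SOME l. goodlam R \<mu> \<sigma> l)" for \<sigma>
  have hl: "goodlam R \<mu> \<sigma> (lam \<sigma>)" if "\<sigma> > 0" for \<sigma>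
    unfolding lam_def using goodlam_exists[OF finR] by (rule someI_ex)
  define \<sigma>k where "\<sigma>k k = B / A * 2 powr (- (real_of_int k * (\<beta> / 2)))" for k :: int
  define AB where "AB = A powr (p * (1 - \<theta>)) * B powr (p * \<theta>)"
  have AB0: "AB > 0" using A B by (simp add: AB_def)
  define h where "h x = ennreal (\<bar>norm x powr \<gamma> * T f x\<bar> powr p)" for x :: 'x
  have hm: "h \<in> borel_measurable lebesgue" unfolding h_def using meas[OF sf] by measurable
  have ann: "(\<integral>\<^sup>+x. indicator (Ann k) x * h x \<partial>lebesgue) \<le> ennreal (Kc * AB * Phi R \<mu> lam \<theta> (\<sigma>k k))" for k
    using ann_k[OF \<theta> A B sub meas Linf L2 sf, of k "lam (\<sigma>k k)"]
    unfolding h_def Kc_def AB_def Phi_def Let_def \<sigma>k_def p_def \<gamma>_def q_def \<beta>_def n_def R_def \<mu>_def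
    by simp
  define \<Omega> where "\<Omega> N = (\<Union>(Ann ` {- int N..<int N}) :: 'x set)" for N :: nat
  have disj: "disjoint_family_on (Ann :: int \<Rightarrow> 'x set) S" for S
    by (auto simp: disjoint_family_on_def dest: Ann_disj)
  have \<Omega>m: "\<Omega> N \<in> sets (lebesgue :: 'x measure)" for N
    unfolding \<Omega>_def by (intro sets.finite_UN) (auto intro: Ann_leb)
  define s where "s N = B / A * 2 powr (real N * (\<beta> / 2))" for N :: nat
  have reidx: "(\<Sum>k\<in>{- int N..<int N}. Phi R \<mu> lam \<theta> (\<sigma>k k)) = (\<Sum>j<2 * N. Phi R \<mu> lam \<theta> (s N * \<rho> powr real j))" for N
  proof (rule sum.reindex_bij_witness[where i="\<lambda>j. int j - int N" and j="\<lambda>k. nat (k + int N)"])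
    fix k assume k: "k \<in> {- int N..<int N}"
    have r: "real (nat (k + int N)) = real_of_int k + real N" using k by simp
    have e: "real N * (\<beta> / 2) + (-(\<beta> / 2)) * (real_of_int k + real N) = - (real_of_int k * (\<beta> / 2))"
      by (simp add: algebra_simps)
    have "s N * \<rho> powr real (nat (k + int N))
        = B / A * (2 powr (real N * (\<beta> / 2)) * 2 powr ((-(\<beta> / 2)) * (real_of_int k + real N)))"
      by (simp only: s_def \<rho>_def r powr_powr mult.assoc)
    also have "2 powr (real N * (\<beta> / 2)) * 2 powr ((-(\<beta> / 2)) * (real_of_int k + real N)) = 2 powr (- (real_of_int k * (\<beta> / 2)))"
      using e by (metis powr_add)
    finally have "s N * \<rho> powr real (nat (k + int N)) = \<sigma>k k" by (simp only: \<sigma>k_def)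
    then show "Phi R \<mu> lam \<theta> (s N * \<rho> powr real (nat (k + int N))) = Phi R \<mu> lam \<theta> (\<sigma>k k)" by simp
  qed auto
  have sumN: "(\<integral>\<^sup>+x. indicator (\<Omega> N) x * h x \<partial>lebesgue) \<le> ennreal (Kc * AB * (CS \<rho> \<theta> * Spf R \<mu> p))" for N
  proof -
    have "(\<integral>\<^sup>+x. indicator (\<Omega> N) x * h x \<partial>lebesgue) = (\<integral>\<^sup>+x. (\<Sum>k\<in>{- int N..<int N}. indicator (Ann k) x * h x) \<partial>lebesgue)"
      by (intro nn_integral_cong) (simp add: \<Omega>_def indicator_UN_disjoint[OF _ disj] sum_distrib_right)
    also have "\<dots> = (\<Sum>k\<in>{- int N..<int N}. (\<integral>\<^sup>+x. indicator (Ann k) x * h x \<partial>lebesgue))"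
      using hm by (intro nn_integral_sum) (auto intro: Ann_leb)
    also have "\<dots> \<le> (\<Sum>k\<in>{- int N..<int N}. ennreal (Kc * AB * Phi R \<mu> lam \<theta> (\<sigma>k k)))"
      by (intro sum_mono ann)
    also have "\<dots> = ennreal (\<Sum>k\<in>{- int N..<int N}. Kc * AB * Phi R \<mu> lam \<theta> (\<sigma>k k))"
      using Kc0 AB0 Phi_nonneg by (intro sum_ennreal) auto
    also have "(\<Sum>k\<in>{- int N..<int N}. Kc * AB * Phi R \<mu> lam \<theta> (\<sigma>k k)) = Kc * AB * (\<Sum>j<2 * N. Phi R \<mu> lam \<theta> (s N * \<rho> powr real j))"
      by (simp add: sum_distrib_left[symmetric] reidx)
    also have "\<dots> \<le> Kc * AB * (CS \<rho> \<theta> * Spf R \<mu> p)"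
    proof (intro mult_left_mono)
      show "(\<Sum>j<2 * N. Phi R \<mu> lam \<theta> (s N * \<rho> powr real j)) \<le> CS \<rho> \<theta> * Spf R \<mu> p"
        unfolding p_def using A B by (intro SL[OF finR R0 \<mu>0 \<rho>0 \<rho>1 _ \<theta> hl]) (auto simp: s_def)
    qed (use Kc0 AB0 in auto)
    finally show ?thesis by (simp add: ennreal_leI)
  qed
  define W where "W = Kc * AB * (CS \<rho> \<theta> * Spf R \<mu> p)"
  have CS0: "CS \<rho> \<theta> \<ge> 0" using CS_nonneg[OF \<rho>0 \<theta>] .
  have Sp0: "Spf R \<mu> p \<ge> 0" unfolding Spf_def using \<mu>0 by (intro sum_nonneg) auto
  have W0: "W \<ge> 0" using Kc0 AB0 CS0 Sp0 by (simp add: W_def)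
  have inc: "incseq (\<lambda>N x. indicator (\<Omega> N) x * h x)"
  proof (intro monoI le_funI)
    fix N N' :: nat and x :: 'x assume "N \<le> N'"
    then have "{- int N..<int N} \<subseteq> {- int N'..<int N'}" by auto
    then have "\<Omega> N \<subseteq> \<Omega> N'" unfolding \<Omega>_def by blast
    then show "indicator (\<Omega> N) x * h x \<le> indicator (\<Omega> N') x * h x"
      by (intro mult_right_mono) (auto simp: indicator_def)
  qed
  have hsup: "(SUP N. indicator (\<Omega> N) x * h x) = h x" for x
  proof (cases "x = 0")
    case True
    then show ?thesis using p1 by (simp add: h_def)
  next
    case False
    define k where "k = \<lfloor>log 2 (norm x)\<rfloor>"
    have xk: "x \<in> Ann k" unfolding k_def using Ann_cover[OF False] .
    define N where "N = nat \<bar>k\<bar> + 1"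
    have "k \<in> {- int N..<int N}" by (auto simp: N_def)
    then have "x \<in> \<Omega> N" using xk by (auto simp: \<Omega>_def)
    then have "h x \<le> (SUP N. indicator (\<Omega> N) x * h x)"
      by (intro SUP_upper2[of N]) auto
    moreover have "(SUP N. indicator (\<Omega> N) x * h x) \<le> h x"
      by (intro SUP_least) (auto simp: indicator_def)
    ultimately show ?thesis by (rule antisym[rotated])
  qed
  have I: "(\<integral>\<^sup>+x. h x \<partial>lebesgue) \<le> ennreal W"
  proof -
    have "(\<integral>\<^sup>+x. h x \<partial>lebesgue) = (\<integral>\<^sup>+x. (SUP N. indicator (\<Omega> N) x * h x) \<partial>lebesgue)"
      by (simp add: hsup)
    also have "\<dots> = (SUP N. (\<integral>\<^sup>+x. indicator (\<Omega> N) x * h x \<partial>lebesgue))"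
      using inc hm \<Omega>m by (intro nn_integral_monotone_convergence_SUP) auto
    also have "\<dots> \<le> ennreal W" unfolding W_def by (intro SUP_least sumN)
    finally show ?thesis .
  qed
  define J where "J = (\<integral>\<^sup>+x. h x \<partial>lebesgue)"
  have Jfin: "J \<noteq> \<infinity>" using I by (auto simp: J_def top_unique)
  have LHS: "Lp_norm lebesgue p (\<lambda>x. norm x powr \<gamma> * T f x) = ennreal (enn2real J powr (1/p))"
    unfolding Lp_norm_def using Jfin by (simp add: J_def h_def Let_def)
  have "enn2real J \<le> enn2real (ennreal W)" using I by (intro enn2real_mono) (auto simp: J_def)
  then have JW: "enn2real J \<le> W" using W0 by simp
  have "enn2real J powr (1/p) \<le> W powr (1/p)" using JW p1 by (intro powr_mono2) auto
  moreover have "W powr (1/p) = Cfun a DIM('x) \<theta> * A powr (1 - \<theta>) * B powr \<theta> * Spf R \<mu> p powr (1/p)"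
  proof -
    have "W powr (1/p) = (Kc * CS \<rho> \<theta>) powr (1/p) * AB powr (1/p) * Spf R \<mu> p powr (1/p)"
      by (simp add: W_def powr_mult mult_ac)
    moreover have "(Kc * CS \<rho> \<theta>) powr (1/p) = Cfun a DIM('x) \<theta>"
      by (simp add: Cfun_def Let_def Kc_def q_def \<gamma>_def \<rho>_def \<beta>_def n_def p_def)
    moreover have "AB powr (1/p) = A powr (1 - \<theta>) * B powr \<theta>"
      using p1 by (simp add: AB_def powr_mult powr_powr)
    ultimately show ?thesis by simp
  qed
  ultimately have "ennreal (enn2real J powr (1/p)) \<le> ennreal (Cfun a DIM('x) \<theta> * A powr (1 - \<theta>) * B powr \<theta> * Spf R \<mu> p powr (1/p))"
    by (intro ennreal_leI) simp
  also have "\<dots> = ennreal (Cfun a DIM('x) \<theta> * A powr (1 - \<theta>) * B powr \<theta>) * ennreal (Spf R \<mu> p powr (1/p))"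
    by (rule ennreal_mult) (auto simp: Cfun_def Let_def)
  also have "ennreal (Spf R \<mu> p powr (1/p)) = Lp_norm M p f"
    using Lp_simple[OF sf, of p] p1 by (simp add: R_def \<mu>_def)
  finally show ?thesis using LHS by (simp add: p_def \<gamma>_def n_def)
qed

theorem lemma2p4:
  fixes a :: real
  assumes "a \<noteq> - real DIM('x::euclidean_space) / 2"
  shows "\<forall>\<theta>::real. 0 < \<theta> \<and> \<theta> < 1 \<longrightarrow>
    (\<exists>C::real. \<forall>(nY::nat) (T :: ((nat \<Rightarrow> real) \<Rightarrow> real) \<Rightarrow> ('x \<Rightarrow> real)) (A::real) (B::real).
      nY > 0 \<and> A > 0 \<and> B > 0 \<and>
      sublinear_on (simple_fun (lebesgue_n nY)) T \<and>
      (\<forall>f. simple_fun (lebesgue_n nY) f \<longrightarrow> T f \<in> borel_measurable lebesgue) \<and>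
      (\<forall>f. simple_fun (lebesgue_n nY) f \<longrightarrow>
          Linf_norm lebesgue (T f) \<le> ennreal A * Lp_norm (lebesgue_n nY) 1 f) \<and>
      (\<forall>f. simple_fun (lebesgue_n nY) f \<longrightarrow>
          Lp_norm lebesgue 2 (\<lambda>x. norm x powr a * T f x) \<le> ennreal B * Lp_norm (lebesgue_n nY) 2 f)
      \<longrightarrow>
      (\<forall>f p. simple_fun (lebesgue_n nY) f \<and> 1 / p = \<theta> / 2 + 1 - \<theta> \<longrightarrow>
          Lp_norm lebesgue p
            (\<lambda>x. norm x powr (a * \<theta> - (1 - \<theta>) * real DIM('x)) * T f x)
          \<le> ennreal (C * A powr (1 - \<theta>) * B powr \<theta>) * Lp_norm (lebesgue_n nY) p f))"
proof (intro allI impI)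
  fix \<theta> :: real assume \<theta>: "0 < \<theta> \<and> \<theta> < 1"
  show "\<exists>C::real. \<forall>(nY::nat) (T :: ((nat \<Rightarrow> real) \<Rightarrow> real) \<Rightarrow> ('x \<Rightarrow> real)) (A::real) (B::real).
      nY > 0 \<and> A > 0 \<and> B > 0 \<and>
      sublinear_on (simple_fun (lebesgue_n nY)) T \<and>
      (\<forall>f. simple_fun (lebesgue_n nY) f \<longrightarrow> T f \<in> borel_measurable lebesgue) \<and>
      (\<forall>f. simple_fun (lebesgue_n nY) f \<longrightarrow>
          Linf_norm lebesgue (T f) \<le> ennreal A * Lp_norm (lebesgue_n nY) 1 f) \<and>
      (\<forall>f. simple_fun (lebesgue_n nY) f \<longrightarrow>
          Lp_norm lebesgue 2 (\<lambda>x. norm x powr a * T f x) \<le> ennreal B * Lp_norm (lebesgue_n nY) 2 f)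
      \<longrightarrow>
      (\<forall>f p. simple_fun (lebesgue_n nY) f \<and> 1 / p = \<theta> / 2 + 1 - \<theta> \<longrightarrow>
          Lp_norm lebesgue p
            (\<lambda>x. norm x powr (a * \<theta> - (1 - \<theta>) * real DIM('x)) * T f x)
          \<le> ennreal (C * A powr (1 - \<theta>) * B powr \<theta>) * Lp_norm (lebesgue_n nY) p f)"
  proof (intro exI[of _ "Cfun a DIM('x) \<theta>"] allI impI)
    fix nY :: nat and T :: "((nat \<Rightarrow> real) \<Rightarrow> real) \<Rightarrow> ('x \<Rightarrow> real)" and A B :: real
    assume H: "nY > 0 \<and> A > 0 \<and> B > 0 \<and>
      sublinear_on (simple_fun (lebesgue_n nY)) T \<and>
      (\<forall>f. simple_fun (lebesgue_n nY) f \<longrightarrow> T f \<in> borel_measurable lebesgue) \<and>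
      (\<forall>f. simple_fun (lebesgue_n nY) f \<longrightarrow>
          Linf_norm lebesgue (T f) \<le> ennreal A * Lp_norm (lebesgue_n nY) 1 f) \<and>
      (\<forall>f. simple_fun (lebesgue_n nY) f \<longrightarrow>
          Lp_norm lebesgue 2 (\<lambda>x. norm x powr a * T f x) \<le> ennreal B * Lp_norm (lebesgue_n nY) 2 f)"
    fix f :: "(nat \<Rightarrow> real) \<Rightarrow> real" and p :: real
    assume Hf: "simple_fun (lebesgue_n nY) f \<and> 1 / p = \<theta> / 2 + 1 - \<theta>"
    have A: "A > 0" and B: "B > 0" and sub: "sublinear_on (simple_fun (lebesgue_n nY)) T" using H by blast+
    have meas: "\<And>f. simple_fun (lebesgue_n nY) f \<Longrightarrow> T f \<in> borel_measurable lebesgue" using H by blast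
    have Linf: "\<And>f. simple_fun (lebesgue_n nY) f \<Longrightarrow> Linf_norm lebesgue (T f) \<le> ennreal A * Lp_norm (lebesgue_n nY) 1 f"
      using H by blast
    have L2: "\<And>f. simple_fun (lebesgue_n nY) f \<Longrightarrow> Lp_norm lebesgue 2 (\<lambda>x. norm x powr a * T f x) \<le> ennreal B * Lp_norm (lebesgue_n nY) 2 f"
      using H by blast
    have sf: "simple_fun (lebesgue_n nY) f" using Hf by blast
    have ip: "1 / p = (2 - \<theta>) / 2" using Hf by (simp add: field_simps)
    have "p = 1 / (1 / p)" by simp
    also have "\<dots> = 2 / (2 - \<theta>)" unfolding ip by simp
    finally have pe: "p = 2 / (2 - \<theta>)" .
    show "Lp_norm lebesgue p (\<lambda>x. norm x powr (a * \<theta> - (1 - \<theta>) * real DIM('x)) * T f x)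
          \<le> ennreal (Cfun a DIM('x) \<theta> * A powr (1 - \<theta>) * B powr \<theta>) * Lp_norm (lebesgue_n nY) p f"
      unfolding pe using \<theta> by (intro main_f[OF assms _ _ A B sub meas Linf L2 sf]) auto
  qed
qed

end
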